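(* Let $\mathcal{D}$ be a small category, let $F\colon \mathcal{D}\to \mathbf{sCat}$ be a functor, and let $f=\mathrm{N}\circ F\colon \mathcal{D}\to\mathbf{sSet}$. Then there is an isomorphism of simplicial sets \[\mathrm{N}(\mathbf{Gr}\,F)\cong \mathrm{N}_f(\mathcal{D})\] compatible with the canonical projections of both sides to $\mathrm{N}(\mathcal{D})$ (the paper states this as an isomorphism of coCartesian fibrations over $\mathrm{N}(\mathcal{D})$).
   Context: $\mathbf{sCat}$ is the category of simplicially enriched categories, $\mathrm{N}\colon\mathbf{sCat}\to\mathbf{sSet}$ is the simplicial (homotopy coherent) nerve, right adjoint to $\mathfrak{C}\colon \mathbf{sSet}\to\mathbf{sCat}$; $\mathrm{N}(\mathcal{D})$ is the ordinary nerve. Relative nerve: for $f\colon\mathcal{D}\to\mathbf{sSet}$, $\mathrm{N}_f(\mathcal{D})$ is the simplicial set whose $n$-simplices consist of (i) a functor $d\colon[n]\to\mathcal{D}$, writing $d_i=d(i)$ and $d_{ij}\colon d_i\to d_j$ for $i\le j$; (ii) for every nonempty $J\subseteq[n]$ with maximal element $j$, a map $s^J\colon\Delta^J\to f(d_j)$; (iii) such that for nonempty $I\subseteq J$ with maxima $i\le j$, $f(d_{ij})\circ s^I = s^J|_{\Delta^I}$. It has a canonical map to $\mathrm{N}(\mathcal{D})$. Grothendieck construction: $\mathbf{Gr}\,F$ is the simplicial category with objects pairs $(x,c)$, $c\in\mathcal{D}$, $x\in\mathrm{Ob}(Fc)$, and hom simplicial sets $\mathbf{Gr}F((x,c),(y,d))=\coprod_{\varphi\colon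 c\to d} Fd(F\varphi\,x,y)\times\{\varphi\}$; composition of $(\sigma,\varphi)\colon(x,c)\to(y,d)$ and $(\tau,\psi)\colon(y,d)\to(z,e)$ is $(\tau\circ F\psi(\sigma),\psi\varphi)$ (extended simplicially). There is a simplicial functor $\mathbf{Gr}F\to\mathcal{D}$, $(x,c)\mapsto c$, with $\mathcal{D}$ viewed as a discrete simplicial category, whose nerve gives the projection $\mathrm{N}(\mathbf{Gr}F)\to\mathrm{N}(\mathcal{D})$. *)

theory Defs
  imports Main
begin

text \<open>A simplicial set is given by its sets of n-simplices together with the action
  of monotone maps alpha : [m] -> [n] (sact X m n alpha : X_n -> X_m).\<close>

record 's sset =
  ssimp :: "nat \<Rightarrow> 's set"
  sact :: "nat \<Rightarrow> nat \<Rightarrow> (nat \<Rightarrow> nat) \<Rightarrow> 's \<Rightarrow> 's"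

definition mono_map :: "nat \<Rightarrow> nat \<Rightarrow> (nat \<Rightarrow> nat) \<Rightarrow> bool" where
  "mono_map m n \<alpha> \<longleftrightarrow> (\<forall>p\<le>m. \<alpha> p \<le> n) \<and> (\<forall>p q. p \<le> q \<longrightarrow> q \<le> m \<longrightarrow> \<alpha> p \<le> \<alpha> q)"

definition is_sset :: "'s sset \<Rightarrow> bool" where
  "is_sset X \<longleftrightarrow>
     (\<forall>m n \<alpha> x. mono_map m n \<alpha> \<longrightarrow> x \<in> ssimp X n \<longrightarrow> sact X m n \<alpha> x \<in> ssimp X m) \<and>
     (\<forall>n x. x \<in> ssimp X n \<longrightarrow> sact X n n id x = x) \<and>
     (\<forall>k m n \<alpha> \<beta> x. mono_map m n \<alpha> \<longrightarrow> mono_map k m \<beta> \<longrightarrow> x \<in> ssimp X n \<longrightarrow>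
        sact X k m \<beta> (sact X m n \<alpha> x) = sact X k n (\<alpha> \<circ> \<beta>) x) \<and>
     (\<forall>m n \<alpha> \<alpha>' x. (\<forall>p\<le>m. \<alpha> p = \<alpha>' p) \<longrightarrow> x \<in> ssimp X n \<longrightarrow>
        sact X m n \<alpha> x = sact X m n \<alpha>' x)"

definition sset_map :: "'s sset \<Rightarrow> 't sset \<Rightarrow> (nat \<Rightarrow> 's \<Rightarrow> 't) \<Rightarrow> bool" where
  "sset_map A B g \<longleftrightarrow>
     (\<forall>n x. x \<in> ssimp A n \<longrightarrow> g n x \<in> ssimp B n) \<and>
     (\<forall>m n \<alpha> x. mono_map m n \<alpha> \<longrightarrow> x \<in> ssimp A n \<longrightarrow>
        g m (sact A m n \<alpha> x) = sact B m n \<alpha> (g n x)) \<and>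
     (\<forall>n x. x \<notin> ssimp A n \<longrightarrow> g n x = undefined)"

text \<open>The standard simplex Delta^J for a finite set J of naturals: its m-simplices are the
  monotone maps [m] -> J (normalised to 0 beyond m).\<close>
definition delta_simp :: "nat set \<Rightarrow> nat \<Rightarrow> (nat \<Rightarrow> nat) set" where
  "delta_simp J m = {\<beta>. (\<forall>p\<le>m. \<beta> p \<in> J) \<and> (\<forall>p q. p \<le> q \<longrightarrow> q \<le> m \<longrightarrow> \<beta> p \<le> \<beta> q)
                        \<and> (\<forall>p>m. \<beta> p = 0)}"

definition delta :: "nat set \<Rightarrow> (nat \<Rightarrow> nat) sset" where
  "delta J = \<lparr>ssimp = delta_simp J,
              sact = (\<lambda>m n \<alpha> \<beta>. (\<lambda>p. if p \<le> m then \<beta> (\<alpha> p) else 0))\<rparr>"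

text \<open>cat_comp D a b c f g is the composite  g o f  of f : a -> b and g : b -> c.\<close>
record ('o, 'm) cat =
  cat_ob :: "'o set"
  cat_hom :: "'o \<Rightarrow> 'o \<Rightarrow> 'm set"
  cat_comp :: "'o \<Rightarrow> 'o \<Rightarrow> 'o \<Rightarrow> 'm \<Rightarrow> 'm \<Rightarrow> 'm"
  cat_id :: "'o \<Rightarrow> 'm"

definition category :: "('o, 'm) cat \<Rightarrow> bool" where
  "category D \<longleftrightarrow>
     (\<forall>a\<in>cat_ob D. cat_id D a \<in> cat_hom D a a) \<and>
     (\<forall>a\<in>cat_ob D. \<forall>b\<in>cat_ob D. \<forall>c\<in>cat_ob D. \<forall>f\<in>cat_hom D a b. \<forall>g\<in>cat_hom D b c.
        cat_comp D a b c f g \<in> cat_hom D a c) \<and>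
     (\<forall>a\<in>cat_ob D. \<forall>b\<in>cat_ob D. \<forall>f\<in>cat_hom D a b.
        cat_comp D a a b (cat_id D a) f = f \<and> cat_comp D a b b f (cat_id D b) = f) \<and>
     (\<forall>a\<in>cat_ob D. \<forall>b\<in>cat_ob D. \<forall>c\<in>cat_ob D. \<forall>d\<in>cat_ob D.
      \<forall>f\<in>cat_hom D a b. \<forall>g\<in>cat_hom D b c. \<forall>h\<in>cat_hom D c d.
        cat_comp D a c d (cat_comp D a b c f g) h = cat_comp D a b d f (cat_comp D b c d g h))"

text \<open>n-simplices of the ordinary nerve N(D): functors [n] -> D, given by objects d_i and
  morphisms d_ij : d_i -> d_j for i <= j <= n.\<close>
definition ord_simp :: "('o, 'm) cat \<Rightarrow> nat \<Rightarrow> ((nat \<Rightarrow> 'o) \<times> (nat \<Rightarrow> nat \<Rightarrow> 'm)) set" where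
  "ord_simp D n = {(d, dm).
     (\<forall>i\<le>n. d i \<in> cat_ob D) \<and> (\<forall>i>n. d i = undefined) \<and>
     (\<forall>i j. i \<le> j \<longrightarrow> j \<le> n \<longrightarrow> dm i j \<in> cat_hom D (d i) (d j)) \<and>
     (\<forall>i j. \<not> (i \<le> j \<and> j \<le> n) \<longrightarrow> dm i j = undefined) \<and>
     (\<forall>i\<le>n. dm i i = cat_id D (d i)) \<and>
     (\<forall>i j k. i \<le> j \<longrightarrow> j \<le> k \<longrightarrow> k \<le> n \<longrightarrow>
        dm i k = cat_comp D (d i) (d j) (d k) (dm i j) (dm j k))}"

text \<open>scomp C x y z n f g is the composite  g o f  of n-simplices f in C(x,y), g in C(y,z);
  sid C x is the identity vertex of C(x,x).\<close>
record ('o, 'm) scat =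
  sobj :: "'o set"
  shom :: "'o \<Rightarrow> 'o \<Rightarrow> 'm sset"
  scomp :: "'o \<Rightarrow> 'o \<Rightarrow> 'o \<Rightarrow> nat \<Rightarrow> 'm \<Rightarrow> 'm \<Rightarrow> 'm"
  sid :: "'o \<Rightarrow> 'm"

definition degen0 :: "'m sset \<Rightarrow> nat \<Rightarrow> 'm \<Rightarrow> 'm" where
  "degen0 X n v = sact X n 0 (\<lambda>_. 0) v"

definition is_scat :: "('o, 'm) scat \<Rightarrow> bool" where
  "is_scat C \<longleftrightarrow>
     (\<forall>x\<in>sobj C. \<forall>y\<in>sobj C. is_sset (shom C x y)) \<and>
     (\<forall>x\<in>sobj C. sid C x \<in> ssimp (shom C x x) 0) \<and>
     (\<forall>x\<in>sobj C. \<forall>y\<in>sobj C. \<forall>z\<in>sobj C. \<forall>n.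
        \<forall>f\<in>ssimp (shom C x y) n. \<forall>g\<in>ssimp (shom C y z) n.
          scomp C x y z n f g \<in> ssimp (shom C x z) n) \<and>
     (\<forall>x\<in>sobj C. \<forall>y\<in>sobj C. \<forall>z\<in>sobj C. \<forall>m n \<alpha>.
        \<forall>f\<in>ssimp (shom C x y) n. \<forall>g\<in>ssimp (shom C y z) n. mono_map m n \<alpha> \<longrightarrow>
          scomp C x y z m (sact (shom C x y) m n \<alpha> f) (sact (shom C y z) m n \<alpha> g)
            = sact (shom C x z) m n \<alpha> (scomp C x y z n f g)) \<and>
     (\<forall>x\<in>sobj C. \<forall>y\<in>sobj C. \<forall>n. \<forall>f\<in>ssimp (shom C x y) n.
        scomp C x x y n (degen0 (shom C x x) n (sid C x)) f = f \<and>
        scomp C x y y n f (degen0 (shom C y y) n (sid C y)) = f) \<and>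
     (\<forall>w\<in>sobj C. \<forall>x\<in>sobj C. \<forall>y\<in>sobj C. \<forall>z\<in>sobj C. \<forall>n.
        \<forall>f\<in>ssimp (shom C w x) n. \<forall>g\<in>ssimp (shom C x y) n. \<forall>h\<in>ssimp (shom C y z) n.
          scomp C w y z n (scomp C w x y n f g) h = scomp C w x z n f (scomp C x y z n g h))"

definition sfunctor :: "('o, 'm) scat \<Rightarrow> ('p, 'n) scat \<Rightarrow> ('o \<Rightarrow> 'p)
    \<Rightarrow> (nat \<Rightarrow> 'o \<Rightarrow> 'o \<Rightarrow> 'm \<Rightarrow> 'n) \<Rightarrow> bool" where
  "sfunctor C C' Go Gh \<longleftrightarrow>
     (\<forall>x\<in>sobj C. Go x \<in> sobj C') \<and>
     (\<forall>x\<in>sobj C. \<forall>y\<in>sobj C. \<forall>n. \<forall>f\<in>ssimp (shom C x y) n.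
        Gh n x y f \<in> ssimp (shom C' (Go x) (Go y)) n) \<and>
     (\<forall>x\<in>sobj C. \<forall>y\<in>sobj C. \<forall>m n \<alpha>. \<forall>f\<in>ssimp (shom C x y) n. mono_map m n \<alpha> \<longrightarrow>
        Gh m x y (sact (shom C x y) m n \<alpha> f) = sact (shom C' (Go x) (Go y)) m n \<alpha> (Gh n x y f)) \<and>
     (\<forall>x\<in>sobj C. \<forall>y\<in>sobj C. \<forall>z\<in>sobj C. \<forall>n.
        \<forall>f\<in>ssimp (shom C x y) n. \<forall>g\<in>ssimp (shom C y z) n.
          Gh n x z (scomp C x y z n f g) = scomp C' (Go x) (Go y) (Go z) n (Gh n x y f) (Gh n y z g)) \<and>
     (\<forall>x\<in>sobj C. Gh 0 x x (sid C x) = sid C' (Go x))"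

definition scat_functor :: "('c, 'd) cat \<Rightarrow> ('c \<Rightarrow> ('o, 'm) scat) \<Rightarrow> ('d \<Rightarrow> 'o \<Rightarrow> 'o)
    \<Rightarrow> ('d \<Rightarrow> nat \<Rightarrow> 'o \<Rightarrow> 'o \<Rightarrow> 'm \<Rightarrow> 'm) \<Rightarrow> bool" where
  "scat_functor D Fo Fob Fhom \<longleftrightarrow>
     (\<forall>c\<in>cat_ob D. is_scat (Fo c)) \<and>
     (\<forall>c\<in>cat_ob D. \<forall>d\<in>cat_ob D. \<forall>\<phi>\<in>cat_hom D c d. sfunctor (Fo c) (Fo d) (Fob \<phi>) (Fhom \<phi>)) \<and>
     (\<forall>c\<in>cat_ob D. \<forall>x\<in>sobj (Fo c). Fob (cat_id D c) x = x) \<and>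
     (\<forall>c\<in>cat_ob D. \<forall>x\<in>sobj (Fo c). \<forall>y\<in>sobj (Fo c). \<forall>n. \<forall>f\<in>ssimp (shom (Fo c) x y) n.
        Fhom (cat_id D c) n x y f = f) \<and>
     (\<forall>c\<in>cat_ob D. \<forall>d\<in>cat_ob D. \<forall>e\<in>cat_ob D. \<forall>\<phi>\<in>cat_hom D c d. \<forall>\<psi>\<in>cat_hom D d e.
        (\<forall>x\<in>sobj (Fo c). Fob (cat_comp D c d e \<phi> \<psi>) x = Fob \<psi> (Fob \<phi> x)) \<and>
        (\<forall>x\<in>sobj (Fo c). \<forall>y\<in>sobj (Fo c). \<forall>n. \<forall>f\<in>ssimp (shom (Fo c) x y) n.
           Fhom (cat_comp D c d e \<phi> \<psi>) n x y f = Fhom \<psi> n (Fob \<phi> x) (Fob \<phi> y) (Fhom \<phi> n x y f)))"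

text \<open>k-simplices of N(P_ij), P_ij the poset of subsets of {i..j} containing i and j:
  chains S 0 <= ... <= S k (normalised to {} beyond k).\<close>
definition valid_chain :: "nat \<Rightarrow> nat \<Rightarrow> nat \<Rightarrow> (nat \<Rightarrow> nat set) \<Rightarrow> bool" where
  "valid_chain i j k S \<longleftrightarrow>
     (\<forall>l\<le>k. i \<in> S l \<and> j \<in> S l \<and> S l \<subseteq> {i..j}) \<and>
     (\<forall>l l'. l \<le> l' \<longrightarrow> l' \<le> k \<longrightarrow> S l \<subseteq> S l') \<and>
     (\<forall>l>k. S l = {})"

text \<open>n-simplices of N(C) = simplicial functors C[Delta^n] -> C: an object x i for each
  i <= n and compatible simplicial maps N(P_ij) -> C(x i, x j).\<close>
definition hc_simp :: "('o, 'm) scat \<Rightarrow> nat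
    \<Rightarrow> ((nat \<Rightarrow> 'o) \<times> (nat \<Rightarrow> nat \<Rightarrow> nat \<Rightarrow> (nat \<Rightarrow> nat set) \<Rightarrow> 'm)) set" where
  "hc_simp C n = {(x, \<sigma>).
     (\<forall>i\<le>n. x i \<in> sobj C) \<and> (\<forall>i>n. x i = undefined) \<and>
     (\<forall>i j k S. i \<le> j \<longrightarrow> j \<le> n \<longrightarrow> valid_chain i j k S \<longrightarrow>
        \<sigma> i j k S \<in> ssimp (shom C (x i) (x j)) k) \<and>
     (\<forall>i j k S. \<not> (i \<le> j \<and> j \<le> n \<and> valid_chain i j k S) \<longrightarrow> \<sigma> i j k S = undefined) \<and>
     (\<forall>i j k k' S \<beta>. i \<le> j \<longrightarrow> j \<le> n \<longrightarrow> valid_chain i j k S \<longrightarrow> mono_map k' k \<beta> \<longrightarrow>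
        sact (shom C (x i) (x j)) k' k \<beta> (\<sigma> i j k S)
          = \<sigma> i j k' (\<lambda>l. if l \<le> k' then S (\<beta> l) else {})) \<and>
     (\<forall>i j l k S T. i \<le> j \<longrightarrow> j \<le> l \<longrightarrow> l \<le> n \<longrightarrow> valid_chain i j k S \<longrightarrow> valid_chain j l k T \<longrightarrow>
        scomp C (x i) (x j) (x l) k (\<sigma> i j k S) (\<sigma> j l k T) = \<sigma> i l k (\<lambda>p. S p \<union> T p)) \<and>
     (\<forall>i k. i \<le> n \<longrightarrow>
        \<sigma> i i k (\<lambda>p. if p \<le> k then {i} else {}) = degen0 (shom C (x i) (x i)) k (sid C (x i)))}"

definition hc_act :: "nat \<Rightarrow> nat \<Rightarrow> (nat \<Rightarrow> nat)
    \<Rightarrow> (nat \<Rightarrow> 'o) \<times> (nat \<Rightarrow> nat \<Rightarrow> nat \<Rightarrow> (nat \<Rightarrow> nat set) \<Rightarrow> 'm)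
    \<Rightarrow> (nat \<Rightarrow> 'o) \<times> (nat \<Rightarrow> nat \<Rightarrow> nat \<Rightarrow> (nat \<Rightarrow> nat set) \<Rightarrow> 'm)" where
  "hc_act m n \<alpha> = (\<lambda>(x, \<sigma>).
     ((\<lambda>i. if i \<le> m then x (\<alpha> i) else undefined),
      (\<lambda>i j k S. if i \<le> j \<and> j \<le> m \<and> valid_chain i j k S
                 then \<sigma> (\<alpha> i) (\<alpha> j) k (\<lambda>l. \<alpha> ` S l) else undefined)))"

definition hc_nerve :: "('o, 'm) scat
    \<Rightarrow> ((nat \<Rightarrow> 'o) \<times> (nat \<Rightarrow> nat \<Rightarrow> nat \<Rightarrow> (nat \<Rightarrow> nat set) \<Rightarrow> 'm)) sset" where
  "hc_nerve C = \<lparr>ssimp = hc_simp C, sact = hc_act\<rparr>"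

definition hc_nerve_map :: "('o \<Rightarrow> 'p) \<Rightarrow> (nat \<Rightarrow> 'o \<Rightarrow> 'o \<Rightarrow> 'm \<Rightarrow> 'n) \<Rightarrow> nat
    \<Rightarrow> (nat \<Rightarrow> 'o) \<times> (nat \<Rightarrow> nat \<Rightarrow> nat \<Rightarrow> (nat \<Rightarrow> nat set) \<Rightarrow> 'm)
    \<Rightarrow> (nat \<Rightarrow> 'p) \<times> (nat \<Rightarrow> nat \<Rightarrow> nat \<Rightarrow> (nat \<Rightarrow> nat set) \<Rightarrow> 'n)" where
  "hc_nerve_map Go Gh n = (\<lambda>(x, \<sigma>).
     ((\<lambda>i. if i \<le> n then Go (x i) else undefined),
      (\<lambda>i j k S. if i \<le> j \<and> j \<le> n \<and> valid_chain i j k S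
                 then Gh k (x i) (x j) (\<sigma> i j k S) else undefined)))"

definition gr_scat :: "('c, 'd) cat \<Rightarrow> ('c \<Rightarrow> ('o, 'm) scat) \<Rightarrow> ('d \<Rightarrow> 'o \<Rightarrow> 'o)
    \<Rightarrow> ('d \<Rightarrow> nat \<Rightarrow> 'o \<Rightarrow> 'o \<Rightarrow> 'm \<Rightarrow> 'm) \<Rightarrow> ('o \<times> 'c, 'm \<times> 'd) scat" where
  "gr_scat D Fo Fob Fhom = \<lparr>
     sobj = {(x, c). c \<in> cat_ob D \<and> x \<in> sobj (Fo c)},
     shom = (\<lambda>(x, c) (y, d).
        \<lparr>ssimp = (\<lambda>n. {(\<tau>, \<phi>). \<phi> \<in> cat_hom D c d \<and> \<tau> \<in> ssimp (shom (Fo d) (Fob \<phi> x) y) n}),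
         sact = (\<lambda>m n \<alpha> (\<tau>, \<phi>). (sact (shom (Fo d) (Fob \<phi> x) y) m n \<alpha> \<tau>, \<phi>))\<rparr>),
     scomp = (\<lambda>(x, c) (y, d) (z, e) n (\<sigma>, \<phi>) (\<tau>, \<psi>).
        (scomp (Fo e) (Fob \<psi> (Fob \<phi> x)) (Fob \<psi> y) z n (Fhom \<psi> n (Fob \<phi> x) y \<sigma>) \<tau>,
         cat_comp D c d e \<phi> \<psi>)),
     sid = (\<lambda>(x, c). (sid (Fo c) x, cat_id D c))\<rparr>"

text \<open>Projection N(Gr F) -> N(D), induced by Gr F -> D (D discrete); the nerve of the
  discrete simplicial category D is identified with the ordinary nerve, the morphism d_ij
  being read off at the vertex {i,j} of N(P_ij).\<close>
definition gr_proj :: "nat \<Rightarrow> (nat \<Rightarrow> 'o \<times> 'c) \<times> (nat \<Rightarrow> nat \<Rightarrow> nat \<Rightarrow> (nat \<Rightarrow> nat set) \<Rightarrow> 'm \<times> 'd)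
    \<Rightarrow> (nat \<Rightarrow> 'c) \<times> (nat \<Rightarrow> nat \<Rightarrow> 'd)" where
  "gr_proj n = (\<lambda>(x, \<sigma>).
     ((\<lambda>i. if i \<le> n then snd (x i) else undefined),
      (\<lambda>i j. if i \<le> j \<and> j \<le> n then snd (\<sigma> i j 0 (\<lambda>l. if l = 0 then {i, j} else {}))
             else undefined)))"

text \<open>n-simplices of N_f(D) for f = (fo, fm) : D -> sSet: a functor (d, dm) : [n] -> D and,
  for each nonempty J <= [n], a simplicial map s J : Delta^J -> f(d_{max J}), such that
  f(d_ij) o s^I = s^J restricted to Delta^I for I <= J.\<close>
definition rel_simp :: "('c, 'd) cat \<Rightarrow> ('c \<Rightarrow> 's sset) \<Rightarrow> ('d \<Rightarrow> nat \<Rightarrow> 's \<Rightarrow> 's) \<Rightarrow> nat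
    \<Rightarrow> ((nat \<Rightarrow> 'c) \<times> (nat \<Rightarrow> nat \<Rightarrow> 'd) \<times> (nat set \<Rightarrow> nat \<Rightarrow> (nat \<Rightarrow> nat) \<Rightarrow> 's)) set" where
  "rel_simp D fo fm n = {(d, dm, s).
     (d, dm) \<in> ord_simp D n \<and>
     (\<forall>J. J \<noteq> {} \<longrightarrow> J \<subseteq> {0..n} \<longrightarrow> sset_map (delta J) (fo (d (Max J))) (s J)) \<and>
     (\<forall>J. \<not> (J \<noteq> {} \<and> J \<subseteq> {0..n}) \<longrightarrow> s J = (\<lambda>m \<beta>. undefined)) \<and>
     (\<forall>I J. I \<noteq> {} \<longrightarrow> I \<subseteq> J \<longrightarrow> J \<subseteq> {0..n} \<longrightarrow>
        (\<forall>m \<beta>. \<beta> \<in> delta_simp I m \<longrightarrow> fm (dm (Max I) (Max J)) m (s I m \<beta>) = s J m \<beta>))}"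

definition rel_act :: "nat \<Rightarrow> nat \<Rightarrow> (nat \<Rightarrow> nat)
    \<Rightarrow> (nat \<Rightarrow> 'c) \<times> (nat \<Rightarrow> nat \<Rightarrow> 'd) \<times> (nat set \<Rightarrow> nat \<Rightarrow> (nat \<Rightarrow> nat) \<Rightarrow> 's)
    \<Rightarrow> (nat \<Rightarrow> 'c) \<times> (nat \<Rightarrow> nat \<Rightarrow> 'd) \<times> (nat set \<Rightarrow> nat \<Rightarrow> (nat \<Rightarrow> nat) \<Rightarrow> 's)" where
  "rel_act m n \<alpha> = (\<lambda>(d, dm, s).
     ((\<lambda>i. if i \<le> m then d (\<alpha> i) else undefined),
      (\<lambda>i j. if i \<le> j \<and> j \<le> m then dm (\<alpha> i) (\<alpha> j) else undefined),
      (\<lambda>J. if J \<noteq> {} \<and> J \<subseteq> {0..m}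
            then (\<lambda>k \<beta>. if \<beta> \<in> delta_simp J k
                         then s (\<alpha> ` J) k (\<lambda>p. if p \<le> k then \<alpha> (\<beta> p) else 0)
                         else undefined)
            else (\<lambda>k \<beta>. undefined))))"

definition rel_proj :: "(nat \<Rightarrow> 'c) \<times> (nat \<Rightarrow> nat \<Rightarrow> 'd) \<times> (nat set \<Rightarrow> nat \<Rightarrow> (nat \<Rightarrow> nat) \<Rightarrow> 's)
    \<Rightarrow> (nat \<Rightarrow> 'c) \<times> (nat \<Rightarrow> nat \<Rightarrow> 'd)" where
  "rel_proj = (\<lambda>(d, dm, s). (d, dm))"

end

theory Submission
  imports Defs
begin


lemma gr_sobj: "X \<in> sobj (gr_scat D Fo Fob Fhom) \<longleftrightarrow> snd X \<in> cat_ob D \<and> fst X \<in> sobj (Fo (snd X))"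
  by (cases X) (auto simp: gr_scat_def)

lemma gr_ssimp: "f \<in> ssimp (shom (gr_scat D Fo Fob Fhom) X Y) k \<longleftrightarrow>
   snd f \<in> cat_hom D (snd X) (snd Y) \<and> fst f \<in> ssimp (shom (Fo (snd Y)) (Fob (snd f) (fst X)) (fst Y)) k"
  by (cases X; cases Y; cases f) (auto simp: gr_scat_def)

lemma gr_sact: "sact (shom (gr_scat D Fo Fob Fhom) X Y) m n \<alpha> f =
   (sact (shom (Fo (snd Y)) (Fob (snd f) (fst X)) (fst Y)) m n \<alpha> (fst f), snd f)"
  by (cases X; cases Y; cases f) (auto simp: gr_scat_def)

lemma gr_scomp: "scomp (gr_scat D Fo Fob Fhom) X Y Z n f g =
   (scomp (Fo (snd Z)) (Fob (snd g) (Fob (snd f) (fst X))) (Fob (snd g) (fst Y)) (fst Z) n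
      (Fhom (snd g) n (Fob (snd f) (fst X)) (fst Y) (fst f)) (fst g),
    cat_comp D (snd X) (snd Y) (snd Z) (snd f) (snd g))"
  by (cases X; cases Y; cases Z; cases f; cases g) (auto simp: gr_scat_def)

lemma gr_sid: "sid (gr_scat D Fo Fob Fhom) X = (sid (Fo (snd X)) (fst X), cat_id D (snd X))"
  by (cases X) (auto simp: gr_scat_def)

lemma gr_degen0: "degen0 (shom (gr_scat D Fo Fob Fhom) X Y) k f =
   (degen0 (shom (Fo (snd Y)) (Fob (snd f) (fst X)) (fst Y)) k (fst f), snd f)"
  by (simp add: degen0_def gr_sact)

lemma hc_nerve_simps[simp]: "ssimp (hc_nerve C) = hc_simp C" "sact (hc_nerve C) = hc_act"
  by (simp_all add: hc_nerve_def)

lemma delta_simps[simp]: "ssimp (delta J) = delta_simp J"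
  "sact (delta J) m n \<alpha> \<beta> = (\<lambda>p. if p \<le> m then \<beta> (\<alpha> p) else 0)"
  by (simp_all add: delta_def)

lemma hc_act_eq: "hc_act m n \<alpha> z =
  ((\<lambda>i. if i \<le> m then fst z (\<alpha> i) else undefined),
   (\<lambda>i j k S. if i \<le> j \<and> j \<le> m \<and> valid_chain i j k S
                 then snd z (\<alpha> i) (\<alpha> j) k (\<lambda>l. \<alpha> ` S l) else undefined))"
  by (simp add: hc_act_def case_prod_unfold)

lemma hc_nerve_map_eq: "hc_nerve_map Go Gh n z =
  ((\<lambda>i. if i \<le> n then Go (fst z i) else undefined),
   (\<lambda>i j k S. if i \<le> j \<and> j \<le> n \<and> valid_chain i j k S
                 then Gh k (fst z i) (fst z j) (snd z i j k S) else undefined))"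
  by (simp add: hc_nerve_map_def case_prod_unfold)

lemma hc_simp_iff: "z \<in> hc_simp C n \<longleftrightarrow>
     (\<forall>i\<le>n. fst z i \<in> sobj C) \<and> (\<forall>i>n. fst z i = undefined) \<and>
     (\<forall>i j k S. i \<le> j \<longrightarrow> j \<le> n \<longrightarrow> valid_chain i j k S \<longrightarrow>
        snd z i j k S \<in> ssimp (shom C (fst z i) (fst z j)) k) \<and>
     (\<forall>i j k S. \<not> (i \<le> j \<and> j \<le> n \<and> valid_chain i j k S) \<longrightarrow> snd z i j k S = undefined) \<and>
     (\<forall>i j k k' S \<beta>. i \<le> j \<longrightarrow> j \<le> n \<longrightarrow> valid_chain i j k S \<longrightarrow> mono_map k' k \<beta> \<longrightarrow>
        sact (shom C (fst z i) (fst z j)) k' k \<beta> (snd z i j k S)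
          = snd z i j k' (\<lambda>l. if l \<le> k' then S (\<beta> l) else {})) \<and>
     (\<forall>i j l k S T. i \<le> j \<longrightarrow> j \<le> l \<longrightarrow> l \<le> n \<longrightarrow> valid_chain i j k S \<longrightarrow> valid_chain j l k T \<longrightarrow>
        scomp C (fst z i) (fst z j) (fst z l) k (snd z i j k S) (snd z j l k T) = snd z i l k (\<lambda>p. S p \<union> T p)) \<and>
     (\<forall>i k. i \<le> n \<longrightarrow>
        snd z i i k (\<lambda>p. if p \<le> k then {i} else {}) = degen0 (shom C (fst z i) (fst z i)) k (sid C (fst z i)))"
  by (cases z) (simp add: hc_simp_def)

lemmas hcD = hc_simp_iff[THEN iffD1, THEN conjunct1]
  hc_simp_iff[THEN iffD1, THEN conjunct2, THEN conjunct1]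
  hc_simp_iff[THEN iffD1, THEN conjunct2, THEN conjunct2, THEN conjunct1]
  hc_simp_iff[THEN iffD1, THEN conjunct2, THEN conjunct2, THEN conjunct2, THEN conjunct1]
  hc_simp_iff[THEN iffD1, THEN conjunct2, THEN conjunct2, THEN conjunct2, THEN conjunct2, THEN conjunct1]
  hc_simp_iff[THEN iffD1, THEN conjunct2, THEN conjunct2, THEN conjunct2, THEN conjunct2, THEN conjunct2, THEN conjunct1]
  hc_simp_iff[THEN iffD1, THEN conjunct2, THEN conjunct2, THEN conjunct2, THEN conjunct2, THEN conjunct2, THEN conjunct2]

context fixes z C n assumes z: "z \<in> hc_simp C n"
begin
lemma hc_obj: "i \<le> n \<Longrightarrow> fst z i \<in> sobj C" using hcD(1)[OF z] by blast
lemma hc_obj_undef: "\<not> i \<le> n \<Longrightarrow> fst z i = undefined" using hcD(2)[OF z] by simp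
lemma hc_in: "i \<le> j \<Longrightarrow> j \<le> n \<Longrightarrow> valid_chain i j k S \<Longrightarrow> snd z i j k S \<in> ssimp (shom C (fst z i) (fst z j)) k"
  using hcD(3)[OF z] by blast
lemma hc_undef: "\<not> (i \<le> j \<and> j \<le> n \<and> valid_chain i j k S) \<Longrightarrow> snd z i j k S = undefined"
  using hcD(4)[OF z] by blast
lemma hc_sact: "i \<le> j \<Longrightarrow> j \<le> n \<Longrightarrow> valid_chain i j k S \<Longrightarrow> mono_map k' k \<beta> \<Longrightarrow>
        sact (shom C (fst z i) (fst z j)) k' k \<beta> (snd z i j k S)
          = snd z i j k' (\<lambda>l. if l \<le> k' then S (\<beta> l) else {})"
  using hcD(5)[OF z] by blast
lemma hc_comp: "i \<le> j \<Longrightarrow> j \<le> l \<Longrightarrow> l \<le> n \<Longrightarrow> valid_chain i j k S \<Longrightarrow> valid_chain j l k T \<Longrightarrow>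
        scomp C (fst z i) (fst z j) (fst z l) k (snd z i j k S) (snd z j l k T) = snd z i l k (\<lambda>p. S p \<union> T p)"
  using hcD(6)[OF z] by blast
lemma hc_id: "i \<le> n \<Longrightarrow>
        snd z i i k (\<lambda>p. if p \<le> k then {i} else {}) = degen0 (shom C (fst z i) (fst z i)) k (sid C (fst z i))"
  using hcD(7)[OF z] by blast
end

lemma valid_chain_vertex: "valid_chain i j 0 (\<lambda>l. if l = 0 then A else {}) \<longleftrightarrow> i \<in> A \<and> j \<in> A \<and> A \<subseteq> {i..j}"
  unfolding valid_chain_def by auto

lemma mono_map_const: "c \<le> n \<Longrightarrow> mono_map m n (\<lambda>_. c)"
  unfolding mono_map_def by auto

lemma vc_le: "valid_chain p q k T \<Longrightarrow> p \<le> q"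
  unfolding valid_chain_def by (metis atLeastAtMost_iff le0 subsetD)

lemma vc_image: assumes "valid_chain p q k T" "\<forall>a b. a \<le> b \<longrightarrow> b \<le> q \<longrightarrow> \<beta> a \<le> \<beta> b"
  shows "valid_chain (\<beta> p) (\<beta> q) k (\<lambda>l. \<beta> ` T l)"
proof -
  have T: "\<And>l. l \<le> k \<Longrightarrow> p \<in> T l \<and> q \<in> T l \<and> T l \<subseteq> {p..q}"
    and M: "\<And>l l'. l \<le> l' \<Longrightarrow> l' \<le> k \<Longrightarrow> T l \<subseteq> T l'"
    and E: "\<And>l. l > k \<Longrightarrow> T l = {}" using assms(1) unfolding valid_chain_def by auto
  have "\<beta> ` T l \<subseteq> {\<beta> p..\<beta> q}" if l: "l \<le> k" for l
  proof
    fix y assume "y \<in> \<beta> ` T l"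
    then obtain t where t: "t \<in> T l" "y = \<beta> t" by blast
    have pt: "p \<le> t" and tq: "t \<le> q" using T[OF l] t(1) by auto
    have "\<beta> p \<le> \<beta> t" "\<beta> t \<le> \<beta> q"
      using assms(2)[rule_format, OF pt tq] assms(2)[rule_format, OF tq order_refl] by auto
    then show "y \<in> {\<beta> p..\<beta> q}" using t(2) by simp
  qed
  moreover have "\<beta> ` T l \<subseteq> \<beta> ` T l'" if "l \<le> l'" "l' \<le> k" for l l'
    using M[OF that] by (rule image_mono)
  ultimately show ?thesis unfolding valid_chain_def using T E by auto
qed

lemma vc_sact: assumes "valid_chain p q k T" "mono_map k' k \<beta>"
  shows "valid_chain p q k' (\<lambda>l. if l \<le> k' then T (\<beta> l) else {})"
  using assms unfolding valid_chain_def mono_map_def by auto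

lemma ds_mem: "\<beta> \<in> delta_simp J m \<Longrightarrow> p \<le> m \<Longrightarrow> \<beta> p \<in> J"
  unfolding delta_simp_def by auto
lemma ds_mono: "\<beta> \<in> delta_simp J m \<Longrightarrow> p \<le> q \<Longrightarrow> q \<le> m \<Longrightarrow> \<beta> p \<le> \<beta> q"
  unfolding delta_simp_def by auto
lemma ds_zero: "\<beta> \<in> delta_simp J m \<Longrightarrow> m < p \<Longrightarrow> \<beta> p = 0"
  unfolding delta_simp_def by auto

lemma Jfin: "J \<subseteq> {0..(n::nat)} \<Longrightarrow> finite J"
  using finite_subset finite_atLeastAtMost by blast
lemma JMax: "J \<noteq> {} \<Longrightarrow> J \<subseteq> {0..(n::nat)} \<Longrightarrow> Max J \<in> J \<and> Max J \<le> n"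
proof -
  assume a: "J \<noteq> {}" "J \<subseteq> {0..n}"
  have "Max J \<in> J" using Max_in[OF Jfin[OF a(2)] a(1)] .
  then show ?thesis using a(2) by auto
qed
lemma JMax_ge: "J \<subseteq> {0..(n::nat)} \<Longrightarrow> x \<in> J \<Longrightarrow> x \<le> Max J"
  using Jfin Max_ge by blast

definition gr_dm :: "nat \<Rightarrow> (nat \<Rightarrow> 'o \<times> 'c) \<times> (nat \<Rightarrow> nat \<Rightarrow> nat \<Rightarrow> (nat \<Rightarrow> nat set) \<Rightarrow> 'm \<times> 'd) \<Rightarrow> nat \<Rightarrow> nat \<Rightarrow> 'd" where
  "gr_dm n z i j = (if i \<le> j \<and> j \<le> n then snd (snd z i j 0 (\<lambda>l. if l = 0 then {i, j} else {})) else undefined)"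

lemma gr_proj_eq: "gr_proj n z = ((\<lambda>i. if i \<le> n then snd (fst z i) else undefined), gr_dm n z)"
  by (simp add: gr_proj_def gr_dm_def case_prod_unfold fun_eq_iff)

definition phiS :: "('d \<Rightarrow> 'o \<Rightarrow> 'o) \<Rightarrow> ('d \<Rightarrow> nat \<Rightarrow> 'o \<Rightarrow> 'o \<Rightarrow> 'm \<Rightarrow> 'm) \<Rightarrow> nat
   \<Rightarrow> (nat \<Rightarrow> 'o \<times> 'c) \<times> (nat \<Rightarrow> nat \<Rightarrow> nat \<Rightarrow> (nat \<Rightarrow> nat set) \<Rightarrow> 'm \<times> 'd)
   \<Rightarrow> nat set \<Rightarrow> nat \<Rightarrow> (nat \<Rightarrow> nat) \<Rightarrow> (nat \<Rightarrow> 'o) \<times> (nat \<Rightarrow> nat \<Rightarrow> nat \<Rightarrow> (nat \<Rightarrow> nat set) \<Rightarrow> 'm)" where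
  "phiS Fob Fhom n z J m \<beta> = (if J \<noteq> {} \<and> J \<subseteq> {0..n} \<and> \<beta> \<in> delta_simp J m then
     ((\<lambda>p. if p \<le> m then Fob (gr_dm n z (\<beta> p) (Max J)) (fst (fst z (\<beta> p))) else undefined),
      (\<lambda>p q k T. if p \<le> q \<and> q \<le> m \<and> valid_chain p q k T then
          Fhom (gr_dm n z (\<beta> q) (Max J)) k (Fob (gr_dm n z (\<beta> p) (\<beta> q)) (fst (fst z (\<beta> p))))
            (fst (fst z (\<beta> q))) (fst (snd z (\<beta> p) (\<beta> q) k (\<lambda>l. \<beta> ` T l)))
        else undefined))
     else undefined)"

definition Phi where
  "Phi Fob Fhom n z = (fst (gr_proj n z), snd (gr_proj n z), phiS Fob Fhom n z)"

definition vtx :: "nat \<Rightarrow> nat \<Rightarrow> nat" where "vtx i = (\<lambda>p. if p = 0 then i else 0)"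
definition iota :: "nat \<Rightarrow> nat \<Rightarrow> nat \<Rightarrow> nat" where "iota i j = (\<lambda>p. if p \<le> j - i then i + p else 0)"

definition Psi where
  "Psi n r = ((\<lambda>i. if i \<le> n then (fst (snd (snd r) {i} 0 (vtx i)) 0, fst r i) else undefined),
     (\<lambda>i j k S. if i \<le> j \<and> j \<le> n \<and> valid_chain i j k S then
         (snd (snd (snd r) {i..j} (j - i) (iota i j)) 0 (j - i) k (\<lambda>l. (\<lambda>t. t - i) ` S l), fst (snd r) i j)
       else undefined))"

locale grs =
  fixes D :: "('c, 'd) cat"
    and Fo :: "'c \<Rightarrow> ('o, 'm) scat"
    and Fob :: "'d \<Rightarrow> 'o \<Rightarrow> 'o"
    and Fhom :: "'d \<Rightarrow> nat \<Rightarrow> 'o \<Rightarrow> 'o \<Rightarrow> 'm \<Rightarrow> 'm"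
  assumes cat: "category D"
    and Ffun: "scat_functor D Fo Fob Fhom"
begin

abbreviation "G \<equiv> gr_scat D Fo Fob Fhom"

lemmas catD0 = category_def[THEN iffD1, THEN conjunct1]
  category_def[THEN iffD1, THEN conjunct2, THEN conjunct1]
  category_def[THEN iffD1, THEN conjunct2, THEN conjunct2, THEN conjunct1]
  category_def[THEN iffD1, THEN conjunct2, THEN conjunct2, THEN conjunct2]
lemmas catD = catD0[OF cat]

lemma id_hom: "a \<in> cat_ob D \<Longrightarrow> cat_id D a \<in> cat_hom D a a"
  using catD(1) by blast
lemma comp_hom: "a \<in> cat_ob D \<Longrightarrow> b \<in> cat_ob D \<Longrightarrow> c \<in> cat_ob D \<Longrightarrow> f \<in> cat_hom D a b \<Longrightarrow> g \<in> cat_hom D b c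
   \<Longrightarrow> cat_comp D a b c f g \<in> cat_hom D a c"
  using catD(2) by blast
lemma comp_id_left: "a \<in> cat_ob D \<Longrightarrow> b \<in> cat_ob D \<Longrightarrow> f \<in> cat_hom D a b \<Longrightarrow> cat_comp D a a b (cat_id D a) f = f"
  using catD(3) by blast
lemma comp_id_right: "a \<in> cat_ob D \<Longrightarrow> b \<in> cat_ob D \<Longrightarrow> f \<in> cat_hom D a b \<Longrightarrow> cat_comp D a b b f (cat_id D b) = f"
  using catD(3) by blast

lemmas FD0 = scat_functor_def[THEN iffD1, THEN conjunct1]
  scat_functor_def[THEN iffD1, THEN conjunct2, THEN conjunct1]
  scat_functor_def[THEN iffD1, THEN conjunct2, THEN conjunct2, THEN conjunct1]
  scat_functor_def[THEN iffD1, THEN conjunct2, THEN conjunct2, THEN conjunct2, THEN conjunct1]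
  scat_functor_def[THEN iffD1, THEN conjunct2, THEN conjunct2, THEN conjunct2, THEN conjunct2]
lemmas FD = FD0[OF Ffun]

lemma Fscat: "c \<in> cat_ob D \<Longrightarrow> is_scat (Fo c)"
  using FD(1) by blast

lemma Fsf: "c \<in> cat_ob D \<Longrightarrow> d \<in> cat_ob D \<Longrightarrow> \<phi> \<in> cat_hom D c d \<Longrightarrow> sfunctor (Fo c) (Fo d) (Fob \<phi>) (Fhom \<phi>)"
  using FD(2) by blast

lemmas sfD = sfunctor_def[THEN iffD1, THEN conjunct1]
  sfunctor_def[THEN iffD1, THEN conjunct2, THEN conjunct1]
  sfunctor_def[THEN iffD1, THEN conjunct2, THEN conjunct2, THEN conjunct1]
  sfunctor_def[THEN iffD1, THEN conjunct2, THEN conjunct2, THEN conjunct2, THEN conjunct1]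
  sfunctor_def[THEN iffD1, THEN conjunct2, THEN conjunct2, THEN conjunct2, THEN conjunct2]

context
  fixes c d \<phi> assumes cd: "c \<in> cat_ob D" "d \<in> cat_ob D" "\<phi> \<in> cat_hom D c d"
begin
lemma Fob_in: "x \<in> sobj (Fo c) \<Longrightarrow> Fob \<phi> x \<in> sobj (Fo d)"
  using sfD(1)[OF Fsf[OF cd]] by blast
lemma Fhom_in: "x \<in> sobj (Fo c) \<Longrightarrow> y \<in> sobj (Fo c) \<Longrightarrow> f \<in> ssimp (shom (Fo c) x y) n \<Longrightarrow>
   Fhom \<phi> n x y f \<in> ssimp (shom (Fo d) (Fob \<phi> x) (Fob \<phi> y)) n"
  using sfD(2)[OF Fsf[OF cd]] by blast
lemma Fhom_sact: "x \<in> sobj (Fo c) \<Longrightarrow> y \<in> sobj (Fo c) \<Longrightarrow> f \<in> ssimp (shom (Fo c) x y) n \<Longrightarrow> mono_map m n \<alpha> \<Longrightarrow>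
   Fhom \<phi> m x y (sact (shom (Fo c) x y) m n \<alpha> f) = sact (shom (Fo d) (Fob \<phi> x) (Fob \<phi> y)) m n \<alpha> (Fhom \<phi> n x y f)"
  using sfD(3)[OF Fsf[OF cd]] by blast
lemma Fhom_scomp: "x \<in> sobj (Fo c) \<Longrightarrow> y \<in> sobj (Fo c) \<Longrightarrow> z \<in> sobj (Fo c) \<Longrightarrow>
   f \<in> ssimp (shom (Fo c) x y) n \<Longrightarrow> g \<in> ssimp (shom (Fo c) y z) n \<Longrightarrow>
   Fhom \<phi> n x z (scomp (Fo c) x y z n f g) = scomp (Fo d) (Fob \<phi> x) (Fob \<phi> y) (Fob \<phi> z) n (Fhom \<phi> n x y f) (Fhom \<phi> n y z g)"
  using sfD(4)[OF Fsf[OF cd]] by blast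
lemma Fhom_sid: "x \<in> sobj (Fo c) \<Longrightarrow> Fhom \<phi> 0 x x (sid (Fo c) x) = sid (Fo d) (Fob \<phi> x)"
  using sfD(5)[OF Fsf[OF cd]] by blast
end

lemma Fob_id: "c \<in> cat_ob D \<Longrightarrow> x \<in> sobj (Fo c) \<Longrightarrow> Fob (cat_id D c) x = x"
  using FD(3) by blast
lemma Fhom_id: "c \<in> cat_ob D \<Longrightarrow> x \<in> sobj (Fo c) \<Longrightarrow> y \<in> sobj (Fo c) \<Longrightarrow> f \<in> ssimp (shom (Fo c) x y) n \<Longrightarrow>
   Fhom (cat_id D c) n x y f = f"
  using FD(4) by blast
lemma Fob_comp: "c \<in> cat_ob D \<Longrightarrow> d \<in> cat_ob D \<Longrightarrow> e \<in> cat_ob D \<Longrightarrow> \<phi> \<in> cat_hom D c d \<Longrightarrow> \<psi> \<in> cat_hom D d e \<Longrightarrow>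
   x \<in> sobj (Fo c) \<Longrightarrow> Fob (cat_comp D c d e \<phi> \<psi>) x = Fob \<psi> (Fob \<phi> x)"
  using FD(5) by blast
lemma Fhom_comp: "c \<in> cat_ob D \<Longrightarrow> d \<in> cat_ob D \<Longrightarrow> e \<in> cat_ob D \<Longrightarrow> \<phi> \<in> cat_hom D c d \<Longrightarrow> \<psi> \<in> cat_hom D d e \<Longrightarrow>
   x \<in> sobj (Fo c) \<Longrightarrow> y \<in> sobj (Fo c) \<Longrightarrow> f \<in> ssimp (shom (Fo c) x y) n \<Longrightarrow>
   Fhom (cat_comp D c d e \<phi> \<psi>) n x y f = Fhom \<psi> n (Fob \<phi> x) (Fob \<phi> y) (Fhom \<phi> n x y f)"
  using FD(5) by blast

lemma sid_in: "c \<in> cat_ob D \<Longrightarrow> x \<in> sobj (Fo c) \<Longrightarrow> sid (Fo c) x \<in> ssimp (shom (Fo c) x x) 0"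
proof -
  assume c: "c \<in> cat_ob D" and x: "x \<in> sobj (Fo c)"
  have "\<forall>x\<in>sobj (Fo c). sid (Fo c) x \<in> ssimp (shom (Fo c) x x) 0"
    using Fscat[OF c] unfolding is_scat_def by (elim conjE)
  then show ?thesis using x by blast
qed

lemma fm_id: assumes c: "c \<in> cat_ob D" and z: "z \<in> hc_simp (Fo c) n"
  shows "hc_nerve_map (Fob (cat_id D c)) (Fhom (cat_id D c)) n z = z"
proof -
  have 1: "(\<lambda>i. if i \<le> n then Fob (cat_id D c) (fst z i) else undefined) = fst z"
  proof
    fix i show "(if i \<le> n then Fob (cat_id D c) (fst z i) else undefined) = fst z i"
      using Fob_id[OF c hc_obj[OF z]] hc_obj_undef[OF z] by simp
  qed
  have 2: "(\<lambda>i j k S. if i \<le> j \<and> j \<le> n \<and> valid_chain i j k S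
                 then Fhom (cat_id D c) k (fst z i) (fst z j) (snd z i j k S) else undefined) = snd z"
  proof (intro ext)
    fix i j k S
    show "(if i \<le> j \<and> j \<le> n \<and> valid_chain i j k S
                 then Fhom (cat_id D c) k (fst z i) (fst z j) (snd z i j k S) else undefined) = snd z i j k S"
    proof (cases "i \<le> j \<and> j \<le> n \<and> valid_chain i j k S")
      case True
      then show ?thesis using Fhom_id[OF c hc_obj[OF z] hc_obj[OF z] hc_in[OF z]] by simp
    next
      case False
      then show ?thesis by (subst if_not_P[OF False]) (rule hc_undef[OF z False, symmetric])
    qed
  qed
  show ?thesis unfolding hc_nerve_map_eq 1 2 by simp
qed


section \<open>Simplices of the nerve of the Grothendieck construction\<close>

context fixes z n assumes z: "z \<in> hc_simp G n"
begin

lemma Zobj: "i \<le> n \<Longrightarrow> snd (fst z i) \<in> cat_ob D \<and> fst (fst z i) \<in> sobj (Fo (snd (fst z i)))"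
  using hc_obj[OF z, of i] unfolding gr_sobj by simp

lemma Zin: "i \<le> j \<Longrightarrow> j \<le> n \<Longrightarrow> valid_chain i j k S \<Longrightarrow>
   snd (snd z i j k S) \<in> cat_hom D (snd (fst z i)) (snd (fst z j)) \<and>
   fst (snd z i j k S) \<in> ssimp (shom (Fo (snd (fst z j))) (Fob (snd (snd z i j k S)) (fst (fst z i))) (fst (fst z j))) k"
  using hc_in[OF z, of i j k S] unfolding gr_ssimp by simp

lemma Zsact: "i \<le> j \<Longrightarrow> j \<le> n \<Longrightarrow> valid_chain i j k S \<Longrightarrow> mono_map k' k \<beta> \<Longrightarrow>
   snd z i j k' (\<lambda>l. if l \<le> k' then S (\<beta> l) else {}) =
   (sact (shom (Fo (snd (fst z j))) (Fob (snd (snd z i j k S)) (fst (fst z i))) (fst (fst z j))) k' k \<beta> (fst (snd z i j k S)),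
    snd (snd z i j k S))"
  using hc_sact[OF z, of i j k S k' \<beta>] unfolding gr_sact by simp

lemma Zconst: assumes ij: "i \<le> j" "j \<le> n" and S: "valid_chain i j k S"
  shows "snd (snd z i j k S) = gr_dm n z i j"
proof -
  let ?V = "\<lambda>A. (\<lambda>l::nat. if l = 0 then A else {})"
  have vc: "snd (snd z i j 0 (?V A)) = snd (snd z i j 0 (?V {i..j}))"
    if A: "i \<in> A" "j \<in> A" "A \<subseteq> {i..j}" for A
  proof -
    let ?E = "\<lambda>l::nat. if l = 0 then A else if l = 1 then {i..j} else {}"
    have E: "valid_chain i j 1 ?E" using A ij unfolding valid_chain_def by auto
    have e0: "(\<lambda>l. if l \<le> 0 then ?E ((\<lambda>_. 0) l) else {}) = ?V A" by auto
    have e1: "(\<lambda>l. if l \<le> 0 then ?E ((\<lambda>_. 1) l) else {}) = ?V {i..j}" by auto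
    have "snd (snd z i j 0 (?V A)) = snd (snd z i j 1 ?E)"
      using Zsact[OF ij E mono_map_const[of 0 1 0]] unfolding e0 by simp
    also have "\<dots> = snd (snd z i j 0 (?V {i..j}))"
      using Zsact[OF ij E mono_map_const[of 1 1 0]] unfolding e1 by simp
    finally show ?thesis .
  qed
  have S0: "i \<in> S 0" "j \<in> S 0" "S 0 \<subseteq> {i..j}" using S unfolding valid_chain_def by auto
  have e: "(\<lambda>l. if l \<le> 0 then S ((\<lambda>_. 0) l) else {}) = ?V (S 0)" by auto
  have "snd (snd z i j k S) = snd (snd z i j 0 (?V (S 0)))"
    using Zsact[OF ij S mono_map_const[of 0 k 0]] unfolding e by simp
  also have "\<dots> = snd (snd z i j 0 (?V {i..j}))" using vc[OF S0] .
  also have "\<dots> = snd (snd z i j 0 (?V {i, j}))" using vc[of "{i,j}"] ij by simp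
  finally show ?thesis using ij by (simp add: gr_dm_def)
qed

lemma Zdm_hom: "i \<le> j \<Longrightarrow> j \<le> n \<Longrightarrow> gr_dm n z i j \<in> cat_hom D (snd (fst z i)) (snd (fst z j))"
  using Zin[of i j 0 "\<lambda>l. if l = 0 then {i, j} else {}"] by (simp add: gr_dm_def valid_chain_vertex)

lemma Zin': "i \<le> j \<Longrightarrow> j \<le> n \<Longrightarrow> valid_chain i j k S \<Longrightarrow>
   fst (snd z i j k S) \<in> ssimp (shom (Fo (snd (fst z j))) (Fob (gr_dm n z i j) (fst (fst z i))) (fst (fst z j))) k"
  using Zin[of i j k S] Zconst[of i j k S] by simp

lemma Zsact': "i \<le> j \<Longrightarrow> j \<le> n \<Longrightarrow> valid_chain i j k S \<Longrightarrow> mono_map k' k \<beta> \<Longrightarrow>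
   fst (snd z i j k' (\<lambda>l. if l \<le> k' then S (\<beta> l) else {})) =
   sact (shom (Fo (snd (fst z j))) (Fob (gr_dm n z i j) (fst (fst z i))) (fst (fst z j))) k' k \<beta> (fst (snd z i j k S))"
  using Zsact[of i j k S k' \<beta>] Zconst[of i j k S] by simp

lemma Zid_fst: "i \<le> n \<Longrightarrow> fst (snd z i i k (\<lambda>p. if p \<le> k then {i} else {})) =
   degen0 (shom (Fo (snd (fst z i))) (fst (fst z i)) (fst (fst z i))) k (sid (Fo (snd (fst z i))) (fst (fst z i)))"
  using hc_id[OF z, of i k] Zobj[of i] by (simp add: gr_degen0 gr_sid Fob_id)

lemma Zid: "i \<le> n \<Longrightarrow> gr_dm n z i i = cat_id D (snd (fst z i))"
proof -
  assume i: "i \<le> n"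
  have e: "(\<lambda>p. if p \<le> 0 then {i} else {}) = (\<lambda>l::nat. if l = 0 then {i, i} else {})" by (simp add: fun_eq_iff)
  show ?thesis using hc_id[OF z i, of 0] i unfolding e by (simp add: gr_degen0 gr_sid gr_dm_def)
qed

lemma Zcomp: "i \<le> j \<Longrightarrow> j \<le> l \<Longrightarrow> l \<le> n \<Longrightarrow> valid_chain i j k S \<Longrightarrow> valid_chain j l k T \<Longrightarrow>
   snd z i l k (\<lambda>p. S p \<union> T p) =
   (scomp (Fo (snd (fst z l))) (Fob (gr_dm n z j l) (Fob (gr_dm n z i j) (fst (fst z i)))) (Fob (gr_dm n z j l) (fst (fst z j))) (fst (fst z l)) k
      (Fhom (gr_dm n z j l) k (Fob (gr_dm n z i j) (fst (fst z i))) (fst (fst z j)) (fst (snd z i j k S))) (fst (snd z j l k T)),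
    cat_comp D (snd (fst z i)) (snd (fst z j)) (snd (fst z l)) (gr_dm n z i j) (gr_dm n z j l))"
proof -
  assume a: "i \<le> j" "j \<le> l" "l \<le> n" "valid_chain i j k S" "valid_chain j l k T"
  have "snd z i l k (\<lambda>p. S p \<union> T p) = scomp G (fst z i) (fst z j) (fst z l) k (snd z i j k S) (snd z j l k T)"
    using hc_comp[OF z a] by simp
  then show ?thesis
    using Zconst[OF a(1) _ a(4)] Zconst[OF a(2) a(3) a(5)] a by (simp add: gr_scomp)
qed

lemma Zdm_comp: assumes a: "i \<le> j" "j \<le> l" "l \<le> n"
  shows "gr_dm n z i l = cat_comp D (snd (fst z i)) (snd (fst z j)) (snd (fst z l)) (gr_dm n z i j) (gr_dm n z j l)"
proof -
  let ?S = "\<lambda>p::nat. if p = 0 then {i, j} else {}"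
  let ?T = "\<lambda>p::nat. if p = 0 then {j, l} else {}"
  have S: "valid_chain i j 0 ?S" and T: "valid_chain j l 0 ?T" using a by (auto simp: valid_chain_vertex)
  have U: "valid_chain i l 0 (\<lambda>p. ?S p \<union> ?T p)" using a unfolding valid_chain_def by auto
  show ?thesis using Zcomp[OF a S T] Zconst[OF _ a(3) U] a by simp
qed

lemma Z_ord: "(\<lambda>i. if i \<le> n then snd (fst z i) else undefined, gr_dm n z) \<in> ord_simp D n"
proof -
  have 1: "\<forall>i\<le>n. (if i \<le> n then snd (fst z i) else undefined) \<in> cat_ob D" using Zobj by auto
  have 2: "\<forall>i j. i \<le> j \<longrightarrow> j \<le> n \<longrightarrow> gr_dm n z i j \<in> cat_hom D (if i \<le> n then snd (fst z i) else undefined) (if j \<le> n then snd (fst z j) else undefined)"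
  proof (intro allI impI)
    fix i j assume a: "i \<le> j" "j \<le> n"
    then have "i \<le> n" by simp
    then show "gr_dm n z i j \<in> cat_hom D (if i \<le> n then snd (fst z i) else undefined) (if j \<le> n then snd (fst z j) else undefined)"
      using Zdm_hom[OF a] a by simp
  qed
  have 3: "\<forall>i j. \<not> (i \<le> j \<and> j \<le> n) \<longrightarrow> gr_dm n z i j = undefined" by (simp add: gr_dm_def)
  have 4: "\<forall>i\<le>n. gr_dm n z i i = cat_id D (if i \<le> n then snd (fst z i) else undefined)" using Zid by auto
  have 5: "\<forall>i j k. i \<le> j \<longrightarrow> j \<le> k \<longrightarrow> k \<le> n \<longrightarrow> gr_dm n z i k = cat_comp D (if i \<le> n then snd (fst z i) else undefined)
      (if j \<le> n then snd (fst z j) else undefined) (if k \<le> n then snd (fst z k) else undefined) (gr_dm n z i j) (gr_dm n z j k)"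
  proof (intro allI impI)
    fix i j k assume a: "i \<le> j" "j \<le> k" "k \<le> n"
    then have "i \<le> n" "j \<le> n" by simp_all
    then show "gr_dm n z i k = cat_comp D (if i \<le> n then snd (fst z i) else undefined)
      (if j \<le> n then snd (fst z j) else undefined) (if k \<le> n then snd (fst z k) else undefined) (gr_dm n z i j) (gr_dm n z j k)"
      using Zdm_comp[OF a] a by simp
  qed
  show ?thesis unfolding ord_simp_def mem_Collect_eq prod.case
    apply (intro conjI)
         apply (fact 1)
        apply simp
       apply (fact 2)
      apply (fact 3)
     apply (fact 4)
    apply (fact 5)
    done
qed

end

end




lemma vc_union: assumes T: "valid_chain p q k T" and T': "valid_chain q r k T'"
  shows "valid_chain p r k (\<lambda>l. T l \<union> T' l)"
proof -
  have pq: "p \<le> q" and qr: "q \<le> r" using vc_le T T' by auto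
  have A: "\<And>l. l \<le> k \<Longrightarrow> p \<in> T l \<and> q \<in> T l \<and> T l \<subseteq> {p..q}"
    and B: "\<And>l l'. l \<le> l' \<Longrightarrow> l' \<le> k \<Longrightarrow> T l \<subseteq> T l'"
    and C: "\<And>l. l > k \<Longrightarrow> T l = {}" using T unfolding valid_chain_def by auto
  have A': "\<And>l. l \<le> k \<Longrightarrow> q \<in> T' l \<and> r \<in> T' l \<and> T' l \<subseteq> {q..r}"
    and B': "\<And>l l'. l \<le> l' \<Longrightarrow> l' \<le> k \<Longrightarrow> T' l \<subseteq> T' l'"
    and C': "\<And>l. l > k \<Longrightarrow> T' l = {}" using T' unfolding valid_chain_def by auto
  have D: "T l \<union> T' l \<subseteq> {p..r}" if "l \<le> k" for l
  proof -
    have "{p..q} \<subseteq> {p..r}" "{q..r} \<subseteq> {p..r}" using pq qr by auto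
    then show ?thesis using A[OF that] A'[OF that] by blast
  qed
  have E: "T l \<union> T' l \<subseteq> T l' \<union> T' l'" if "l \<le> l'" "l' \<le> k" for l l'
    using B[OF that] B'[OF that] by blast
  show ?thesis unfolding valid_chain_def
  proof (intro conjI allI impI)
    fix l assume l: "l \<le> k"
    show "p \<in> T l \<union> T' l" using A[OF l] by blast
    show "r \<in> T l \<union> T' l" using A'[OF l] by blast
    show "T l \<union> T' l \<subseteq> {p..r}" by (rule D[OF l])
  next
    fix l l' assume "l \<le> l'" "l' \<le> k" then show "T l \<union> T' l \<subseteq> T l' \<union> T' l'" by (rule E)
  next
    fix l assume "k < l" then show "T l \<union> T' l = {}" using C C' by simp
  qed
qed

lemma ds_act: "\<beta> \<in> delta_simp J m \<Longrightarrow> mono_map m' m \<alpha> \<Longrightarrow> (\<lambda>p. if p \<le> m' then \<beta> (\<alpha> p) else 0) \<in> delta_simp J m'"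
  unfolding delta_simp_def mono_map_def by auto

lemma phiS_undef: "\<not> (J \<noteq> {} \<and> J \<subseteq> {0..n} \<and> \<beta> \<in> delta_simp J m) \<Longrightarrow> phiS Fob Fhom n z J m \<beta> = undefined"
  unfolding phiS_def by (rule if_not_P)

lemma phiS_fst: "J \<noteq> {} \<Longrightarrow> J \<subseteq> {0..n} \<Longrightarrow> \<gamma> \<in> delta_simp J k \<Longrightarrow>
  fst (phiS Fob Fhom n z J k \<gamma>) = (\<lambda>p. if p \<le> k then Fob (gr_dm n z (\<gamma> p) (Max J)) (fst (fst z (\<gamma> p))) else undefined)"
  by (simp add: phiS_def)

lemma phiS_snd: "J \<noteq> {} \<Longrightarrow> J \<subseteq> {0..n} \<Longrightarrow> \<gamma> \<in> delta_simp J k \<Longrightarrow>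
  snd (phiS Fob Fhom n z J k \<gamma>) = (\<lambda>p q kk T. if p \<le> q \<and> q \<le> k \<and> valid_chain p q kk T then
          Fhom (gr_dm n z (\<gamma> q) (Max J)) kk (Fob (gr_dm n z (\<gamma> p) (\<gamma> q)) (fst (fst z (\<gamma> p))))
            (fst (fst z (\<gamma> q))) (fst (snd z (\<gamma> p) (\<gamma> q) kk (\<lambda>l. \<gamma> ` T l)))
        else undefined)"
  by (simp add: phiS_def)

lemma vtx_ds: "vtx i \<in> delta_simp {i} 0"
  unfolding vtx_def delta_simp_def by auto

lemma iota_ds: "i \<le> j \<Longrightarrow> iota i j \<in> delta_simp {i..j} (j - i)"
  unfolding iota_def delta_simp_def by auto

lemma iota_0: "iota i j 0 = i" and iota_top: "i \<le> j \<Longrightarrow> iota i j (j - i) = j"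
  unfolding iota_def by auto

lemma Max_interval: "i \<le> (j::nat) \<Longrightarrow> Max {i..j} = j"
  by (rule Max_eqI) auto

lemma vc_shift: assumes "valid_chain i j k S"
  shows "valid_chain 0 (j - i) k (\<lambda>l. (\<lambda>t. t - i) ` S l)"
proof -
  have A: "\<And>l. l \<le> k \<Longrightarrow> i \<in> S l \<and> j \<in> S l \<and> S l \<subseteq> {i..j}"
    and B: "\<And>l l'. l \<le> l' \<Longrightarrow> l' \<le> k \<Longrightarrow> S l \<subseteq> S l'"
    and C: "\<And>l. l > k \<Longrightarrow> S l = {}" using assms unfolding valid_chain_def by auto
  show ?thesis unfolding valid_chain_def
  proof (intro conjI allI impI)
    fix l assume l: "l \<le> k"
    show "0 \<in> (\<lambda>t. t - i) ` S l" using A[OF l] by force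
    show "j - i \<in> (\<lambda>t. t - i) ` S l" using A[OF l] by force
    show "(\<lambda>t. t - i) ` S l \<subseteq> {0..j - i}"
    proof
      fix y assume "y \<in> (\<lambda>t. t - i) ` S l"
      then obtain t where "t \<in> S l" "y = t - i" by blast
      moreover have "t \<le> j" using A[OF l] \<open>t \<in> S l\<close> by auto
      ultimately show "y \<in> {0..j - i}" by simp
    qed
  next
    fix l l' assume "l \<le> l'" "l' \<le> k" then show "(\<lambda>t. t - i) ` S l \<subseteq> (\<lambda>t. t - i) ` S l'"
      using B by (intro image_mono) auto
  next
    fix l assume "k < l" then show "(\<lambda>t. t - i) ` S l = {}" using C by simp
  qed
qed

lemma iota_shift: assumes "valid_chain i j k S"
  shows "(\<lambda>l. iota i j ` (\<lambda>l. (\<lambda>t. t - i) ` S l) l) = S"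
proof (rule ext)
  fix l
  have sub: "S l \<subseteq> {i..j}"
  proof (cases "l \<le> k")
    case True then show ?thesis using assms unfolding valid_chain_def by blast
  next
    case False then show ?thesis using assms unfolding valid_chain_def by simp
  qed
  have "iota i j ` (\<lambda>t. t - i) ` S l = (\<lambda>t. iota i j (t - i)) ` S l" by (simp add: image_image)
  also have "\<dots> = id ` S l"
  proof (rule image_cong)
    fix x assume "x \<in> S l"
    then have "i \<le> x" "x \<le> j" using sub by auto
    then have "x - i \<le> j - i" by simp
    then show "iota i j (x - i) = id x" using \<open>i \<le> x\<close> by (simp add: iota_def)
  qed simp
  finally show "iota i j ` (\<lambda>l. (\<lambda>t. t - i) ` S l) l = S l" by simp
qed

lemma hc_act_fst: "i \<le> m' \<Longrightarrow> fst (hc_act m' m \<alpha> w) i = fst w (\<alpha> i)"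
  by (simp add: hc_act_eq)
lemma hc_act_snd: "i \<le> j \<Longrightarrow> j \<le> m' \<Longrightarrow> valid_chain i j k S \<Longrightarrow>
   snd (hc_act m' m \<alpha> w) i j k S = snd w (\<alpha> i) (\<alpha> j) k (\<lambda>l. \<alpha> ` S l)"
  by (simp add: hc_act_eq)
lemma hnm_fst: "i \<le> m \<Longrightarrow> fst (hc_nerve_map Go Gh m w) i = Go (fst w i)"
  by (simp add: hc_nerve_map_eq)
lemma hnm_snd: "i \<le> j \<Longrightarrow> j \<le> m \<Longrightarrow> valid_chain i j k S \<Longrightarrow>
   snd (hc_nerve_map Go Gh m w) i j k S = Gh k (fst w i) (fst w j) (snd w i j k S)"
  by (simp add: hc_nerve_map_eq)

lemma vc_shift2: assumes ip: "i \<le> p" and T: "valid_chain p q k T"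
  shows "valid_chain (p - i) (q - i) k (\<lambda>l. (\<lambda>t. t - i) ` T l)"
proof -
  have A: "\<And>l. l \<le> k \<Longrightarrow> p \<in> T l \<and> q \<in> T l \<and> T l \<subseteq> {p..q}"
    and B: "\<And>l l'. l \<le> l' \<Longrightarrow> l' \<le> k \<Longrightarrow> T l \<subseteq> T l'"
    and C: "\<And>l. l > k \<Longrightarrow> T l = {}" using T unfolding valid_chain_def by auto
  show ?thesis unfolding valid_chain_def
  proof (intro conjI allI impI)
    fix l assume l: "l \<le> k"
    show "p - i \<in> (\<lambda>t. t - i) ` T l" using A[OF l] by force
    show "q - i \<in> (\<lambda>t. t - i) ` T l" using A[OF l] by force
    show "(\<lambda>t. t - i) ` T l \<subseteq> {p - i..q - i}"
    proof
      fix y assume "y \<in> (\<lambda>t. t - i) ` T l"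
      then obtain t where t: "t \<in> T l" "y = t - i" by blast
      moreover have "p \<le> t" "t \<le> q" using A[OF l] t(1) by auto
      ultimately show "y \<in> {p - i..q - i}" using ip by (simp add: diff_le_mono)
    qed
  next
    fix l l' assume "l \<le> l'" "l' \<le> k" then show "(\<lambda>t. t - i) ` T l \<subseteq> (\<lambda>t. t - i) ` T l'"
      using B by (intro image_mono) auto
  next
    fix l assume "k < l" then show "(\<lambda>t. t - i) ` T l = {}" using C by simp
  qed
qed

lemma chain_sub: assumes "valid_chain p q k S" shows "S l \<subseteq> {p..q}"
proof (cases "l \<le> k")
  case True then show ?thesis using assms unfolding valid_chain_def by blast
next
  case False then show ?thesis using assms unfolding valid_chain_def by simp
qed

lemma iota_shift2: assumes S: "valid_chain p q k S" and ip: "i \<le> p" and qj: "q \<le> j"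
  shows "(\<lambda>l. iota i j ` (\<lambda>l. (\<lambda>t. t - i) ` S l) l) = S"
proof (rule ext)
  fix l
  have sub: "S l \<subseteq> {p..q}" by (rule chain_sub[OF S])
  have "iota i j ` (\<lambda>t. t - i) ` S l = (\<lambda>t. iota i j (t - i)) ` S l" by (simp add: image_image)
  also have "\<dots> = id ` S l"
  proof (rule image_cong)
    fix x assume "x \<in> S l"
    then have "i \<le> x" "x \<le> j" using sub ip qj by auto
    then have "x - i \<le> j - i" by simp
    then show "iota i j (x - i) = id x" using \<open>i \<le> x\<close> by (simp add: iota_def)
  qed simp
  finally show "iota i j ` (\<lambda>l. (\<lambda>t. t - i) ` S l) l = S l" by simp
qed

definition relA :: "(nat set \<Rightarrow> nat \<Rightarrow> (nat \<Rightarrow> nat) \<Rightarrow> (nat \<Rightarrow> 'o) \<times> 'x) \<Rightarrow> nat \<Rightarrow> 'o" where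
  "relA s i = fst (s {i} 0 (vtx i)) 0"

lemma ordD0: assumes "(d, dm) \<in> ord_simp D n" shows
     "(\<forall>i\<le>n. d i \<in> cat_ob D) \<and> (\<forall>i>n. d i = undefined) \<and>
     (\<forall>i j. i \<le> j \<longrightarrow> j \<le> n \<longrightarrow> dm i j \<in> cat_hom D (d i) (d j)) \<and>
     (\<forall>i j. \<not> (i \<le> j \<and> j \<le> n) \<longrightarrow> dm i j = undefined) \<and>
     (\<forall>i\<le>n. dm i i = cat_id D (d i)) \<and>
     (\<forall>i j k. i \<le> j \<longrightarrow> j \<le> k \<longrightarrow> k \<le> n \<longrightarrow>
        dm i k = cat_comp D (d i) (d j) (d k) (dm i j) (dm j k))"
  using assms unfolding ord_simp_def mem_Collect_eq prod.case .
lemmas ordD = ordD0[THEN conjunct1]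
  ordD0[THEN conjunct2, THEN conjunct1]
  ordD0[THEN conjunct2, THEN conjunct2, THEN conjunct1]
  ordD0[THEN conjunct2, THEN conjunct2, THEN conjunct2, THEN conjunct1]
  ordD0[THEN conjunct2, THEN conjunct2, THEN conjunct2, THEN conjunct2, THEN conjunct1]
  ordD0[THEN conjunct2, THEN conjunct2, THEN conjunct2, THEN conjunct2, THEN conjunct2]

lemma relD0: assumes "(d, dm, s) \<in> rel_simp D fo fm n" shows
     "(d, dm) \<in> ord_simp D n \<and>
     (\<forall>J. J \<noteq> {} \<longrightarrow> J \<subseteq> {0..n} \<longrightarrow> sset_map (delta J) (fo (d (Max J))) (s J)) \<and>
     (\<forall>J. \<not> (J \<noteq> {} \<and> J \<subseteq> {0..n}) \<longrightarrow> s J = (\<lambda>m \<beta>. undefined)) \<and>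
     (\<forall>I J. I \<noteq> {} \<longrightarrow> I \<subseteq> J \<longrightarrow> J \<subseteq> {0..n} \<longrightarrow>
        (\<forall>m \<beta>. \<beta> \<in> delta_simp I m \<longrightarrow> fm (dm (Max I) (Max J)) m (s I m \<beta>) = s J m \<beta>))"
  using assms unfolding rel_simp_def mem_Collect_eq prod.case .
lemmas relD = relD0[THEN conjunct1]
  relD0[THEN conjunct2, THEN conjunct1]
  relD0[THEN conjunct2, THEN conjunct2, THEN conjunct1]
  relD0[THEN conjunct2, THEN conjunct2, THEN conjunct2]

lemmas smapD = sset_map_def[THEN iffD1, THEN conjunct1]
  sset_map_def[THEN iffD1, THEN conjunct2, THEN conjunct1]
  sset_map_def[THEN iffD1, THEN conjunct2, THEN conjunct2]

context grs begin
context fixes z n assumes z: "z \<in> hc_simp G n"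
begin

lemma Zc: "i \<le> n \<Longrightarrow> snd (fst z i) \<in> cat_ob D" using Zobj[OF z] by blast
lemma Za: "i \<le> n \<Longrightarrow> fst (fst z i) \<in> sobj (Fo (snd (fst z i)))" using Zobj[OF z] by blast

lemma Fob_dm_in: "a \<le> b \<Longrightarrow> b \<le> n \<Longrightarrow> X \<in> sobj (Fo (snd (fst z a))) \<Longrightarrow>
    Fob (gr_dm n z a b) X \<in> sobj (Fo (snd (fst z b)))"
  using Fob_in[OF Zc Zc Zdm_hom[OF z]] by simp

lemma Fhom_dm_in: "a \<le> b \<Longrightarrow> b \<le> n \<Longrightarrow> X \<in> sobj (Fo (snd (fst z a))) \<Longrightarrow> Y \<in> sobj (Fo (snd (fst z a))) \<Longrightarrow>
    f \<in> ssimp (shom (Fo (snd (fst z a))) X Y) k \<Longrightarrow>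
    Fhom (gr_dm n z a b) k X Y f \<in> ssimp (shom (Fo (snd (fst z b))) (Fob (gr_dm n z a b) X) (Fob (gr_dm n z a b) Y)) k"
  using Fhom_in[OF Zc Zc Zdm_hom[OF z]] by simp

lemma Fob_dm_comp: "a \<le> b \<Longrightarrow> b \<le> c \<Longrightarrow> c \<le> n \<Longrightarrow> X \<in> sobj (Fo (snd (fst z a))) \<Longrightarrow>
    Fob (gr_dm n z b c) (Fob (gr_dm n z a b) X) = Fob (gr_dm n z a c) X"
proof -
  assume a: "a \<le> b" "b \<le> c" "c \<le> n" and X: "X \<in> sobj (Fo (snd (fst z a)))"
  have "Fob (gr_dm n z a c) X = Fob (cat_comp D (snd (fst z a)) (snd (fst z b)) (snd (fst z c)) (gr_dm n z a b) (gr_dm n z b c)) X"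
    using Zdm_comp[OF z a] by simp
  also have "\<dots> = Fob (gr_dm n z b c) (Fob (gr_dm n z a b) X)"
    using a by (intro Fob_comp Zc Zdm_hom[OF z] X) simp_all
  finally show ?thesis by simp
qed

lemma Fhom_dm_comp: "a \<le> b \<Longrightarrow> b \<le> c \<Longrightarrow> c \<le> n \<Longrightarrow> X \<in> sobj (Fo (snd (fst z a))) \<Longrightarrow> Y \<in> sobj (Fo (snd (fst z a))) \<Longrightarrow>
    f \<in> ssimp (shom (Fo (snd (fst z a))) X Y) k \<Longrightarrow>
    Fhom (gr_dm n z b c) k (Fob (gr_dm n z a b) X) (Fob (gr_dm n z a b) Y) (Fhom (gr_dm n z a b) k X Y f) = Fhom (gr_dm n z a c) k X Y f"
proof -
  assume a: "a \<le> b" "b \<le> c" "c \<le> n" and X: "X \<in> sobj (Fo (snd (fst z a)))" and Y: "Y \<in> sobj (Fo (snd (fst z a)))"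
    and f: "f \<in> ssimp (shom (Fo (snd (fst z a))) X Y) k"
  have "Fhom (gr_dm n z a c) k X Y f = Fhom (cat_comp D (snd (fst z a)) (snd (fst z b)) (snd (fst z c)) (gr_dm n z a b) (gr_dm n z b c)) k X Y f"
    using Zdm_comp[OF z a] by simp
  also have "\<dots> = Fhom (gr_dm n z b c) k (Fob (gr_dm n z a b) X) (Fob (gr_dm n z a b) Y) (Fhom (gr_dm n z a b) k X Y f)"
    using a by (intro Fhom_comp Zc Zdm_hom[OF z] X Y f) simp_all
  finally show ?thesis by simp
qed

lemma Fob_dm_id: "a \<le> n \<Longrightarrow> X \<in> sobj (Fo (snd (fst z a))) \<Longrightarrow> Fob (gr_dm n z a a) X = X"
  using Zid[OF z] Fob_id Zc by simp

lemma Fhom_dm_id: "a \<le> n \<Longrightarrow> X \<in> sobj (Fo (snd (fst z a))) \<Longrightarrow> Y \<in> sobj (Fo (snd (fst z a))) \<Longrightarrow>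
    f \<in> ssimp (shom (Fo (snd (fst z a))) X Y) k \<Longrightarrow> Fhom (gr_dm n z a a) k X Y f = f"
  using Zid[OF z] Fhom_id Zc by simp

lemma Fhom_dm_sact: "a \<le> b \<Longrightarrow> b \<le> n \<Longrightarrow> X \<in> sobj (Fo (snd (fst z a))) \<Longrightarrow> Y \<in> sobj (Fo (snd (fst z a))) \<Longrightarrow>
    f \<in> ssimp (shom (Fo (snd (fst z a))) X Y) k \<Longrightarrow> mono_map k' k \<beta> \<Longrightarrow>
    Fhom (gr_dm n z a b) k' X Y (sact (shom (Fo (snd (fst z a))) X Y) k' k \<beta> f) =
    sact (shom (Fo (snd (fst z b))) (Fob (gr_dm n z a b) X) (Fob (gr_dm n z a b) Y)) k' k \<beta> (Fhom (gr_dm n z a b) k X Y f)"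
  using Fhom_sact[OF Zc Zc Zdm_hom[OF z]] by simp

lemma Fhom_dm_scomp: "a \<le> b \<Longrightarrow> b \<le> n \<Longrightarrow> X \<in> sobj (Fo (snd (fst z a))) \<Longrightarrow> Y \<in> sobj (Fo (snd (fst z a))) \<Longrightarrow>
    W \<in> sobj (Fo (snd (fst z a))) \<Longrightarrow>
    f \<in> ssimp (shom (Fo (snd (fst z a))) X Y) k \<Longrightarrow> g \<in> ssimp (shom (Fo (snd (fst z a))) Y W) k \<Longrightarrow>
    Fhom (gr_dm n z a b) k X W (scomp (Fo (snd (fst z a))) X Y W k f g) =
    scomp (Fo (snd (fst z b))) (Fob (gr_dm n z a b) X) (Fob (gr_dm n z a b) Y) (Fob (gr_dm n z a b) W) k
      (Fhom (gr_dm n z a b) k X Y f) (Fhom (gr_dm n z a b) k Y W g)"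
  using Fhom_scomp[OF Zc Zc Zdm_hom[OF z]] by simp

lemma Fhom_dm_sid: "a \<le> b \<Longrightarrow> b \<le> n \<Longrightarrow> X \<in> sobj (Fo (snd (fst z a))) \<Longrightarrow>
    Fhom (gr_dm n z a b) 0 X X (sid (Fo (snd (fst z a))) X) = sid (Fo (snd (fst z b))) (Fob (gr_dm n z a b) X)"
  using Fhom_sid[OF Zc Zc Zdm_hom[OF z]] by simp


lemma P_hc: assumes J: "J \<noteq> {}" "J \<subseteq> {0..n}" and \<beta>: "\<beta> \<in> delta_simp J m"
  shows "phiS Fob Fhom n z J m \<beta> \<in> hc_simp (Fo (snd (fst z (Max J)))) m"
proof -
  define t where "t = Max J"
  have t: "t \<in> J" "t \<le> n" using JMax[OF J] t_def by auto
  have bt: "\<And>p. p \<le> m \<Longrightarrow> \<beta> p \<le> t" using ds_mem[OF \<beta>] JMax_ge[OF J(2)] t_def by simp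
  have bm: "\<And>p q. p \<le> q \<Longrightarrow> q \<le> m \<Longrightarrow> \<beta> p \<le> \<beta> q" using ds_mono[OF \<beta>] .
  define Ob where "Ob = (\<lambda>p. if p \<le> m then Fob (gr_dm n z (\<beta> p) t) (fst (fst z (\<beta> p))) else undefined)"
  define Cm where "Cm = (\<lambda>p q k T. if p \<le> q \<and> q \<le> m \<and> valid_chain p q k T then
          Fhom (gr_dm n z (\<beta> q) t) k (Fob (gr_dm n z (\<beta> p) (\<beta> q)) (fst (fst z (\<beta> p))))
            (fst (fst z (\<beta> q))) (fst (snd z (\<beta> p) (\<beta> q) k (\<lambda>l. \<beta> ` T l)))
        else undefined)"
  have eq: "phiS Fob Fhom n z J m \<beta> = (Ob, Cm)" unfolding phiS_def Ob_def Cm_def t_def using J \<beta> by simp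
  have vimg: "valid_chain (\<beta> p) (\<beta> q) k (\<lambda>l. \<beta> ` T l)" if "p \<le> q" "q \<le> m" "valid_chain p q k T" for p q k T
    using that by (intro vc_image) (auto intro: bm)
  have bn: "\<And>p. p \<le> m \<Longrightarrow> \<beta> p \<le> n" using bt t(2) order_trans by blast
  have Ob: "\<And>p. p \<le> m \<Longrightarrow> Ob p = Fob (gr_dm n z (\<beta> p) t) (fst (fst z (\<beta> p)))" by (simp add: Ob_def)
  have X: "Fob (gr_dm n z (\<beta> p) (\<beta> q)) (fst (fst z (\<beta> p))) \<in> sobj (Fo (snd (fst z (\<beta> q))))"
    if "p \<le> q" "q \<le> m" for p q
    using that by (intro Fob_dm_in Za bm bn) auto
  have Ob2: "Ob p = Fob (gr_dm n z (\<beta> q) t) (Fob (gr_dm n z (\<beta> p) (\<beta> q)) (fst (fst z (\<beta> p))))"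
    if "p \<le> q" "q \<le> m" for p q
    using that Fob_dm_comp[OF bm[OF that] bt[OF that(2)] t(2) Za[OF bn]] Ob by simp
  have Cm: "\<And>p q k T. p \<le> q \<Longrightarrow> q \<le> m \<Longrightarrow> valid_chain p q k T \<Longrightarrow> Cm p q k T =
          Fhom (gr_dm n z (\<beta> q) t) k (Fob (gr_dm n z (\<beta> p) (\<beta> q)) (fst (fst z (\<beta> p))))
            (fst (fst z (\<beta> q))) (fst (snd z (\<beta> p) (\<beta> q) k (\<lambda>l. \<beta> ` T l)))" by (simp add: Cm_def)
  have tau: "fst (snd z (\<beta> p) (\<beta> q) k (\<lambda>l. \<beta> ` T l)) \<in> ssimp (shom (Fo (snd (fst z (\<beta> q))))
      (Fob (gr_dm n z (\<beta> p) (\<beta> q)) (fst (fst z (\<beta> p)))) (fst (fst z (\<beta> q)))) k"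
    if "p \<le> q" "q \<le> m" "valid_chain p q k T" for p q k T
    using that by (intro Zin'[OF z] vimg bm bn) auto
  show ?thesis unfolding eq hc_simp_iff fst_conv snd_conv t_def[symmetric]
  proof (intro conjI allI impI)
    fix p assume p: "p \<le> m"
    show "Ob p \<in> sobj (Fo (snd (fst z t)))" unfolding Ob[OF p]
      by (intro Fob_dm_in Za bt p t bn)
  next
    fix p assume "m < p" then show "Ob p = undefined" by (simp add: Ob_def)
  next
    fix p q k T assume pq: "p \<le> q" "q \<le> m" "valid_chain p q k T"
    have "Cm p q k T \<in> ssimp (shom (Fo (snd (fst z t))) (Fob (gr_dm n z (\<beta> q) t) (Fob (gr_dm n z (\<beta> p) (\<beta> q)) (fst (fst z (\<beta> p)))))
       (Fob (gr_dm n z (\<beta> q) t) (fst (fst z (\<beta> q))))) k"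
      unfolding Cm[OF pq] by (intro Fhom_dm_in bt t X Za bn tau pq)
    then show "Cm p q k T \<in> ssimp (shom (Fo (snd (fst z t))) (Ob p) (Ob q)) k"
      using Ob2[OF pq(1,2)] Ob[OF pq(2)] by simp
  next
    fix p q k T assume "\<not> (p \<le> q \<and> q \<le> m \<and> valid_chain p q k T)"
    then show "Cm p q k T = undefined" unfolding Cm_def by (rule if_not_P)
  next
    fix p q k k' T \<beta>' assume pq: "p \<le> q" "q \<le> m" "valid_chain p q k T" and mo: "mono_map k' k \<beta>'"
    have v': "valid_chain p q k' (\<lambda>l. if l \<le> k' then T (\<beta>' l) else {})" by (rule vc_sact[OF pq(3) mo])
    have img: "(\<lambda>l. \<beta> ` (if l \<le> k' then T (\<beta>' l) else {})) = (\<lambda>l. if l \<le> k' then (\<lambda>l. \<beta> ` T l) (\<beta>' l) else {})"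
      by (simp add: fun_eq_iff)
    let ?X = "Fob (gr_dm n z (\<beta> p) (\<beta> q)) (fst (fst z (\<beta> p)))"
    let ?Y = "fst (fst z (\<beta> q))"
    let ?\<tau> = "fst (snd z (\<beta> p) (\<beta> q) k (\<lambda>l. \<beta> ` T l))"
    have "Cm p q k' (\<lambda>l. if l \<le> k' then T (\<beta>' l) else {}) =
       Fhom (gr_dm n z (\<beta> q) t) k' ?X ?Y (fst (snd z (\<beta> p) (\<beta> q) k' (\<lambda>l. if l \<le> k' then (\<lambda>l. \<beta> ` T l) (\<beta>' l) else {})))"
      using Cm[OF pq(1,2) v'] img by simp
    also have "\<dots> = Fhom (gr_dm n z (\<beta> q) t) k' ?X ?Y (sact (shom (Fo (snd (fst z (\<beta> q)))) ?X ?Y) k' k \<beta>' ?\<tau>)"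
      using Zsact'[OF z bm[OF pq(1,2)] bn[OF pq(2)] vimg[OF pq] mo] by simp
    also have "\<dots> = sact (shom (Fo (snd (fst z t))) (Fob (gr_dm n z (\<beta> q) t) ?X) (Fob (gr_dm n z (\<beta> q) t) ?Y)) k' k \<beta>'
        (Fhom (gr_dm n z (\<beta> q) t) k ?X ?Y ?\<tau>)"
      by (intro Fhom_dm_sact bt t X Za bn tau pq mo)
    also have "\<dots> = sact (shom (Fo (snd (fst z t))) (Ob p) (Ob q)) k' k \<beta>' (Cm p q k T)"
      using Ob2[OF pq(1,2)] Ob[OF pq(2)] Cm[OF pq] by simp
    finally show "sact (shom (Fo (snd (fst z t))) (Ob p) (Ob q)) k' k \<beta>' (Cm p q k T) =
        Cm p q k' (\<lambda>l. if l \<le> k' then T (\<beta>' l) else {})" by simp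
  next
    fix p q r k T T' assume pqr: "p \<le> q" "q \<le> r" "r \<le> m" and T: "valid_chain p q k T" and T': "valid_chain q r k T'"
    have qm: "q \<le> m" using pqr by simp
    have pr: "p \<le> r" using pqr by simp
    have U: "valid_chain p r k (\<lambda>l. T l \<union> T' l)" by (rule vc_union[OF T T'])
    let ?a = "\<beta> p" let ?b = "\<beta> q" let ?c = "\<beta> r"
    have ab: "?a \<le> ?b" and bc: "?b \<le> ?c" and ct: "?c \<le> t" and cn: "?c \<le> n" and bn': "?b \<le> n"
      using bm bt bn pqr by (auto intro: order_trans)
    let ?X = "Fob (gr_dm n z ?a ?b) (fst (fst z ?a))"
    let ?Xc = "Fob (gr_dm n z ?b ?c) ?X"
    let ?Yc = "Fob (gr_dm n z ?b ?c) (fst (fst z ?b))"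
    let ?Zc = "fst (fst z ?c)"
    let ?tab = "fst (snd z ?a ?b k (\<lambda>l. \<beta> ` T l))"
    let ?tbc = "fst (snd z ?b ?c k (\<lambda>l. \<beta> ` T' l))"
    have Xin: "?X \<in> sobj (Fo (snd (fst z ?b)))" using X[OF pqr(1) qm] .
    have Xcin: "?Xc \<in> sobj (Fo (snd (fst z ?c)))" by (intro Fob_dm_in bc cn Xin)
    have Ycin: "?Yc \<in> sobj (Fo (snd (fst z ?c)))" by (intro Fob_dm_in bc cn Za bn')
    have Zcin: "?Zc \<in> sobj (Fo (snd (fst z ?c)))" by (intro Za cn)
    have tab: "?tab \<in> ssimp (shom (Fo (snd (fst z ?b))) ?X (fst (fst z ?b))) k" by (rule tau[OF pqr(1) qm T])
    have tbc: "?tbc \<in> ssimp (shom (Fo (snd (fst z ?c))) ?Yc ?Zc) k" by (rule tau[OF pqr(2,3) T'])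
    have ftab: "Fhom (gr_dm n z ?b ?c) k ?X (fst (fst z ?b)) ?tab \<in> ssimp (shom (Fo (snd (fst z ?c))) ?Xc ?Yc) k"
      by (intro Fhom_dm_in bc cn Xin Za bn' tab)
    have img: "(\<lambda>l. \<beta> ` (T l \<union> T' l)) = (\<lambda>l. \<beta> ` T l \<union> \<beta> ` T' l)" by (simp add: image_Un)
    have Xac: "Fob (gr_dm n z ?a ?c) (fst (fst z ?a)) = ?Xc"
      using Fob_dm_comp[OF ab bc cn Za] bn pqr by simp
    have "Cm p r k (\<lambda>l. T l \<union> T' l) = Fhom (gr_dm n z ?c t) k ?Xc ?Zc (fst (snd z ?a ?c k (\<lambda>l. \<beta> ` T l \<union> \<beta> ` T' l)))"
      using Cm[OF pr pqr(3) U] img Xac by simp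
    also have "\<dots> = Fhom (gr_dm n z ?c t) k ?Xc ?Zc (scomp (Fo (snd (fst z ?c))) ?Xc ?Yc ?Zc k
          (Fhom (gr_dm n z ?b ?c) k ?X (fst (fst z ?b)) ?tab) ?tbc)"
      using Zcomp[OF z ab bc cn vimg[OF pqr(1) qm T] vimg[OF pqr(2,3) T']] by simp
    also have "\<dots> = scomp (Fo (snd (fst z t))) (Fob (gr_dm n z ?c t) ?Xc) (Fob (gr_dm n z ?c t) ?Yc) (Fob (gr_dm n z ?c t) ?Zc) k
          (Fhom (gr_dm n z ?c t) k ?Xc ?Yc (Fhom (gr_dm n z ?b ?c) k ?X (fst (fst z ?b)) ?tab))
          (Fhom (gr_dm n z ?c t) k ?Yc ?Zc ?tbc)"
      by (intro Fhom_dm_scomp ct t Xcin Ycin Zcin ftab tbc)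
    also have "\<dots> = scomp (Fo (snd (fst z t))) (Ob p) (Ob q) (Ob r) k (Cm p q k T) (Cm q r k T')"
    proof -
      have 1: "Fob (gr_dm n z ?c t) ?Xc = Ob p"
        using Fob_dm_comp[OF bc ct t(2) Xin] Ob2[OF pqr(1) qm] by simp
      have 2: "Fob (gr_dm n z ?c t) ?Yc = Ob q"
        using Fob_dm_comp[OF bc ct t(2) Za[OF bn']] Ob[OF qm] by simp
      have 3: "Fob (gr_dm n z ?c t) ?Zc = Ob r" using Ob[OF pqr(3)] by simp
      have 4: "Fhom (gr_dm n z ?c t) k ?Xc ?Yc (Fhom (gr_dm n z ?b ?c) k ?X (fst (fst z ?b)) ?tab) = Cm p q k T"
        using Fhom_dm_comp[OF bc ct t(2) Xin Za[OF bn'] tab] Cm[OF pqr(1) qm T] by simp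
      have 5: "Fhom (gr_dm n z ?c t) k ?Yc ?Zc ?tbc = Cm q r k T'" using Cm[OF pqr(2,3) T'] by simp
      show ?thesis unfolding 1 2 3 4 5 ..
    qed
    finally show "scomp (Fo (snd (fst z t))) (Ob p) (Ob q) (Ob r) k (Cm p q k T) (Cm q r k T') = Cm p r k (\<lambda>l. T l \<union> T' l)"
      by simp
  next
    fix p k assume p: "p \<le> m"
    let ?a = "\<beta> p"
    let ?A = "fst (fst z ?a)"
    have v: "valid_chain p p k (\<lambda>q. if q \<le> k then {p} else {})" unfolding valid_chain_def by auto
    have img: "(\<lambda>l. \<beta> ` (if l \<le> k then {p} else {})) = (\<lambda>l. if l \<le> k then {?a} else {})" by (simp add: fun_eq_iff)
    have A: "?A \<in> sobj (Fo (snd (fst z ?a)))" by (intro Za bn p)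
    have sidin: "sid (Fo (snd (fst z ?a))) ?A \<in> ssimp (shom (Fo (snd (fst z ?a))) ?A ?A) 0"
      by (intro sid_in Zc bn p A)
    have "Cm p p k (\<lambda>q. if q \<le> k then {p} else {}) = Fhom (gr_dm n z ?a t) k ?A ?A
         (degen0 (shom (Fo (snd (fst z ?a))) ?A ?A) k (sid (Fo (snd (fst z ?a))) ?A))"
      using Cm[OF order_refl p v] img Fob_dm_id[OF bn[OF p] A] Zid_fst[OF z bn[OF p]] by simp
    also have "\<dots> = sact (shom (Fo (snd (fst z t))) (Fob (gr_dm n z ?a t) ?A) (Fob (gr_dm n z ?a t) ?A)) k 0 (\<lambda>_. 0)
         (Fhom (gr_dm n z ?a t) 0 ?A ?A (sid (Fo (snd (fst z ?a))) ?A))"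
      unfolding degen0_def by (intro Fhom_dm_sact bt p t A sidin mono_map_const) simp
    also have "\<dots> = degen0 (shom (Fo (snd (fst z t))) (Ob p) (Ob p)) k (sid (Fo (snd (fst z t))) (Ob p))"
      unfolding degen0_def Fhom_dm_sid[OF bt[OF p] t(2) A] Ob[OF p] ..
    finally show "Cm p p k (\<lambda>q. if q \<le> k then {p} else {}) = degen0 (shom (Fo (snd (fst z t))) (Ob p) (Ob p)) k (sid (Fo (snd (fst z t))) (Ob p))" .
  qed
qed


lemma P_nat: assumes J: "J \<noteq> {}" "J \<subseteq> {0..n}" and \<beta>: "\<beta> \<in> delta_simp J m" and mo: "mono_map m' m \<alpha>"
  shows "phiS Fob Fhom n z J m' (\<lambda>p. if p \<le> m' then \<beta> (\<alpha> p) else 0) = hc_act m' m \<alpha> (phiS Fob Fhom n z J m \<beta>)"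
proof -
  let ?\<beta>' = "\<lambda>p. if p \<le> m' then \<beta> (\<alpha> p) else 0"
  have b': "?\<beta>' \<in> delta_simp J m'" by (rule ds_act[OF \<beta> mo])
  have am: "\<And>i. i \<le> m' \<Longrightarrow> \<alpha> i \<le> m" and amono: "\<And>i j. i \<le> j \<Longrightarrow> j \<le> m' \<Longrightarrow> \<alpha> i \<le> \<alpha> j"
    using mo unfolding mono_map_def by auto
  have img: "(\<lambda>l. ?\<beta>' ` S l) = (\<lambda>l. \<beta> ` (\<lambda>l. \<alpha> ` S l) l)" if "valid_chain i j k S" "j \<le> m'" for i j k S
  proof (rule ext)
    fix l
    have sub: "S l \<subseteq> {0..m'}"
    proof (cases "l \<le> k")
      case True
      then have "S l \<subseteq> {i..j}" using that(1) unfolding valid_chain_def by blast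
      then show ?thesis using that(2) by auto
    next
      case False
      then have "S l = {}" using that(1) unfolding valid_chain_def by simp
      then show ?thesis by simp
    qed
    show "?\<beta>' ` S l = \<beta> ` (\<lambda>l. \<alpha> ` S l) l" unfolding image_image
      by (rule image_cong) (use sub in auto)
  qed
  have vimg: "valid_chain (\<alpha> i) (\<alpha> j) k (\<lambda>l. \<alpha> ` S l)" if "valid_chain i j k S" "j \<le> m'" for i j k S
    using that by (intro vc_image) (auto intro: amono)
  show ?thesis
  proof (rule prod_eqI)
    show "fst (phiS Fob Fhom n z J m' ?\<beta>') = fst (hc_act m' m \<alpha> (phiS Fob Fhom n z J m \<beta>))"
    proof
      fix p show "fst (phiS Fob Fhom n z J m' ?\<beta>') p = fst (hc_act m' m \<alpha> (phiS Fob Fhom n z J m \<beta>)) p"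
        unfolding hc_act_eq fst_conv phiS_fst[OF J b'] phiS_fst[OF J \<beta>] using am by simp
    qed
  next
    show "snd (phiS Fob Fhom n z J m' ?\<beta>') = snd (hc_act m' m \<alpha> (phiS Fob Fhom n z J m \<beta>))"
    proof (intro ext)
      fix p q k T
      show "snd (phiS Fob Fhom n z J m' ?\<beta>') p q k T = snd (hc_act m' m \<alpha> (phiS Fob Fhom n z J m \<beta>)) p q k T"
      proof (cases "p \<le> q \<and> q \<le> m' \<and> valid_chain p q k T")
        case True
        then have c: "\<alpha> p \<le> \<alpha> q \<and> \<alpha> q \<le> m \<and> valid_chain (\<alpha> p) (\<alpha> q) k (\<lambda>l. \<alpha> ` T l)"
          using amono am vimg by auto
        show ?thesis unfolding hc_act_eq snd_conv phiS_snd[OF J b'] phiS_snd[OF J \<beta>]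
          using True c img[of p q k T] by simp
      next
        case False
        then show ?thesis unfolding hc_act_eq snd_conv phiS_snd[OF J b'] by (simp only: if_not_P if_False)
      qed
    qed
  qed
qed


lemma P_compat: assumes I: "I \<noteq> {}" "I \<subseteq> J" and J: "J \<subseteq> {0..n}" and \<beta>: "\<beta> \<in> delta_simp I m"
  shows "hc_nerve_map (Fob (gr_dm n z (Max I) (Max J))) (Fhom (gr_dm n z (Max I) (Max J))) m (phiS Fob Fhom n z I m \<beta>)
     = phiS Fob Fhom n z J m \<beta>"
proof -
  have J0: "J \<noteq> {}" using I by auto
  have I0: "I \<subseteq> {0..n}" using I J by auto
  have \<beta>J: "\<beta> \<in> delta_simp J m" using \<beta> I unfolding delta_simp_def by auto
  define i0 where "i0 = Max I"
  define t where "t = Max J"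
  have it: "i0 \<le> t" unfolding i0_def t_def using Max_mono[OF I(2) I(1) Jfin[OF J]] .
  have tn: "t \<le> n" using JMax[OF J0 J] t_def by simp
  have bi: "\<And>p. p \<le> m \<Longrightarrow> \<beta> p \<le> i0" using ds_mem[OF \<beta>] JMax_ge[OF I0] i0_def by simp
  have bm: "\<And>p q. p \<le> q \<Longrightarrow> q \<le> m \<Longrightarrow> \<beta> p \<le> \<beta> q" using ds_mono[OF \<beta>] .
  have bn: "\<And>p. p \<le> m \<Longrightarrow> \<beta> p \<le> n" using bi it tn by (meson order_trans)
  have i0n: "i0 \<le> n" using it tn by simp
  have vimg: "valid_chain (\<beta> p) (\<beta> q) k (\<lambda>l. \<beta> ` T l)" if "p \<le> q" "q \<le> m" "valid_chain p q k T" for p q k T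
    using that by (intro vc_image) (auto intro: bm)
  show ?thesis unfolding i0_def[symmetric] t_def[symmetric]
  proof (rule prod_eqI)
    show "fst (hc_nerve_map (Fob (gr_dm n z i0 t)) (Fhom (gr_dm n z i0 t)) m (phiS Fob Fhom n z I m \<beta>)) =
          fst (phiS Fob Fhom n z J m \<beta>)"
    proof
      fix p
      show "fst (hc_nerve_map (Fob (gr_dm n z i0 t)) (Fhom (gr_dm n z i0 t)) m (phiS Fob Fhom n z I m \<beta>)) p =
          fst (phiS Fob Fhom n z J m \<beta>) p"
      proof (cases "p \<le> m")
        case True
        show ?thesis unfolding hc_nerve_map_eq fst_conv phiS_fst[OF I(1) I0 \<beta>] phiS_fst[OF J0 J \<beta>J]
          using True Fob_dm_comp[OF bi[OF True] it tn Za[OF bn[OF True]]] i0_def t_def by simp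
      next
        case False then show ?thesis unfolding hc_nerve_map_eq fst_conv phiS_fst[OF J0 J \<beta>J] by simp
      qed
    qed
  next
    show "snd (hc_nerve_map (Fob (gr_dm n z i0 t)) (Fhom (gr_dm n z i0 t)) m (phiS Fob Fhom n z I m \<beta>)) =
          snd (phiS Fob Fhom n z J m \<beta>)"
    proof (intro ext)
      fix p q k T
      show "snd (hc_nerve_map (Fob (gr_dm n z i0 t)) (Fhom (gr_dm n z i0 t)) m (phiS Fob Fhom n z I m \<beta>)) p q k T =
          snd (phiS Fob Fhom n z J m \<beta>) p q k T"
      proof (cases "p \<le> q \<and> q \<le> m \<and> valid_chain p q k T")
        case True
        then have pq: "p \<le> q" "q \<le> m" "valid_chain p q k T" by auto
        let ?a = "\<beta> p" let ?b = "\<beta> q"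
        let ?X = "Fob (gr_dm n z ?a ?b) (fst (fst z ?a))"
        let ?\<tau> = "fst (snd z ?a ?b k (\<lambda>l. \<beta> ` T l))"
        have ab: "?a \<le> ?b" using bm pq by simp
        have Xin: "?X \<in> sobj (Fo (snd (fst z ?b)))" using ab bn pq by (intro Fob_dm_in Za) auto
        have Yin: "fst (fst z ?b) \<in> sobj (Fo (snd (fst z ?b)))" using bn pq by (intro Za) auto
        have tau: "?\<tau> \<in> ssimp (shom (Fo (snd (fst z ?b))) ?X (fst (fst z ?b))) k"
          using ab bn pq by (intro Zin'[OF z] vimg) auto
        have o1: "Fob (gr_dm n z ?a i0) (fst (fst z ?a)) = Fob (gr_dm n z ?b i0) ?X"
          using Fob_dm_comp[OF ab bi[OF pq(2)] i0n Za[OF bn]] pq by simp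
        have "Fhom (gr_dm n z i0 t) k (Fob (gr_dm n z ?b i0) ?X) (Fob (gr_dm n z ?b i0) (fst (fst z ?b)))
                (Fhom (gr_dm n z ?b i0) k ?X (fst (fst z ?b)) ?\<tau>) = Fhom (gr_dm n z ?b t) k ?X (fst (fst z ?b)) ?\<tau>"
          by (rule Fhom_dm_comp[OF bi[OF pq(2)] it tn Xin Yin tau])
        then show ?thesis unfolding hc_nerve_map_eq snd_conv fst_conv phiS_snd[OF I(1) I0 \<beta>] phiS_snd[OF J0 J \<beta>J]
            phiS_fst[OF I(1) I0 \<beta>]
          using True pq o1 i0_def t_def by simp
      next
        case False then show ?thesis unfolding hc_nerve_map_eq snd_conv phiS_snd[OF J0 J \<beta>J] by (simp only: if_not_P if_False)
      qed
    qed
  qed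
qed

lemma P_rel: "Phi Fob Fhom n z \<in> rel_simp D (\<lambda>c. hc_nerve (Fo c)) (\<lambda>\<phi>. hc_nerve_map (Fob \<phi>) (Fhom \<phi>)) n"
proof -
  have d: "\<And>J. J \<noteq> {} \<Longrightarrow> J \<subseteq> {0..n} \<Longrightarrow> (if Max J \<le> n then snd (fst z (Max J)) else undefined) = snd (fst z (Max J))"
    using JMax by simp
  have 2: "\<forall>J. J \<noteq> {} \<longrightarrow> J \<subseteq> {0..n} \<longrightarrow> sset_map (delta J)
      (hc_nerve (Fo (if Max J \<le> n then snd (fst z (Max J)) else undefined))) (phiS Fob Fhom n z J)"
  proof (intro allI impI)
    fix J :: "nat set" assume J: "J \<noteq> {}" "J \<subseteq> {0..n}"
    show "sset_map (delta J) (hc_nerve (Fo (if Max J \<le> n then snd (fst z (Max J)) else undefined))) (phiS Fob Fhom n z J)"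
      unfolding d[OF J] sset_map_def hc_nerve_simps delta_simps
    proof (intro conjI allI impI)
      fix m \<beta> assume "\<beta> \<in> delta_simp J m"
      then show "phiS Fob Fhom n z J m \<beta> \<in> hc_simp (Fo (snd (fst z (Max J)))) m" by (rule P_hc[OF J])
    next
      fix m' m \<alpha> \<beta> assume "mono_map m' m \<alpha>" "\<beta> \<in> delta_simp J m"
      then show "phiS Fob Fhom n z J m' (\<lambda>p. if p \<le> m' then \<beta> (\<alpha> p) else 0) = hc_act m' m \<alpha> (phiS Fob Fhom n z J m \<beta>)"
        using P_nat[OF J] by blast
    next
      fix m \<beta> assume "\<beta> \<notin> delta_simp J m"
      then show "phiS Fob Fhom n z J m \<beta> = undefined" by (simp add: phiS_def)
    qed
  qed
  have 3: "\<forall>J. \<not> (J \<noteq> {} \<and> J \<subseteq> {0..n}) \<longrightarrow> phiS Fob Fhom n z J = (\<lambda>m \<beta>. undefined)"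
    by (auto simp: phiS_def fun_eq_iff)
  have 4: "\<forall>I J. I \<noteq> {} \<longrightarrow> I \<subseteq> J \<longrightarrow> J \<subseteq> {0..n} \<longrightarrow>
        (\<forall>m \<beta>. \<beta> \<in> delta_simp I m \<longrightarrow> hc_nerve_map (Fob (gr_dm n z (Max I) (Max J))) (Fhom (gr_dm n z (Max I) (Max J))) m (phiS Fob Fhom n z I m \<beta>)
           = phiS Fob Fhom n z J m \<beta>)"
    using P_compat by blast
  show ?thesis unfolding rel_simp_def Phi_def gr_proj_eq fst_conv snd_conv mem_Collect_eq prod.case
    using Z_ord[OF z] 2 3 4 by blast
qed


lemma img_restrict: assumes "valid_chain p q kk T" "q \<le> k"
  shows "(\<lambda>l. (\<lambda>p. if p \<le> k then f p else 0) ` T l) = (\<lambda>l. f ` T l)"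
proof (rule ext)
  fix l
  have sub: "T l \<subseteq> {0..k}"
  proof (cases "l \<le> kk")
    case True
    then have "T l \<subseteq> {p..q}" using assms(1) unfolding valid_chain_def by blast
    then show ?thesis using assms(2) by auto
  next
    case False
    then have "T l = {}" using assms(1) unfolding valid_chain_def by simp
    then show ?thesis by simp
  qed
  show "(\<lambda>p. if p \<le> k then f p else 0) ` T l = f ` T l"
    by (rule image_cong) (use sub in auto)
qed

lemma P_act: assumes mo: "mono_map m n \<alpha>"
  shows "Phi Fob Fhom m (hc_act m n \<alpha> z) = rel_act m n \<alpha> (Phi Fob Fhom n z)"
proof -
  let ?z = "hc_act m n \<alpha> z"
  have am: "\<And>i. i \<le> m \<Longrightarrow> \<alpha> i \<le> n" and amono: "\<And>i j. i \<le> j \<Longrightarrow> j \<le> m \<Longrightarrow> \<alpha> i \<le> \<alpha> j"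
    using mo unfolding mono_map_def by auto
  have fz: "fst ?z = (\<lambda>i. if i \<le> m then fst z (\<alpha> i) else undefined)" by (simp add: hc_act_eq)
  have sz: "snd ?z i j k S = snd z (\<alpha> i) (\<alpha> j) k (\<lambda>l. \<alpha> ` S l)" if "i \<le> j" "j \<le> m" "valid_chain i j k S" for i j k S
    using that by (simp add: hc_act_eq)
  have dm: "gr_dm m ?z i j = gr_dm n z (\<alpha> i) (\<alpha> j)" if "i \<le> j" "j \<le> m" for i j
  proof -
    have v: "valid_chain i j 0 (\<lambda>l. if l = 0 then {i, j} else {})" using that by (simp add: valid_chain_vertex)
    have e: "(\<lambda>l. \<alpha> ` (if l = 0 then {i, j} else {})) = (\<lambda>l. if l = 0 then {\<alpha> i, \<alpha> j} else {})"
      by (simp add: fun_eq_iff)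
    have "gr_dm m ?z i j = snd (snd ?z i j 0 (\<lambda>l. if l = 0 then {i, j} else {}))" using that by (simp add: gr_dm_def)
    also have "\<dots> = snd (snd z (\<alpha> i) (\<alpha> j) 0 (\<lambda>l. \<alpha> ` (if l = 0 then {i, j} else {})))" using sz[OF that v] by simp
    also have "\<dots> = snd (snd z (\<alpha> i) (\<alpha> j) 0 (\<lambda>l. if l = 0 then {\<alpha> i, \<alpha> j} else {}))" unfolding e ..
    also have "\<dots> = gr_dm n z (\<alpha> i) (\<alpha> j)" using that amono am by (simp add: gr_dm_def)
    finally show ?thesis .
  qed
  have 1: "fst (gr_proj m ?z) = (\<lambda>i. if i \<le> m then fst (gr_proj n z) (\<alpha> i) else undefined)"
    unfolding gr_proj_eq fst_conv fz using am by (simp add: fun_eq_iff)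
  have 2: "snd (gr_proj m ?z) = (\<lambda>i j. if i \<le> j \<and> j \<le> m then snd (gr_proj n z) (\<alpha> i) (\<alpha> j) else undefined)"
    unfolding gr_proj_eq snd_conv using dm by (auto simp: fun_eq_iff gr_dm_def)
  have 3: "phiS Fob Fhom m ?z = (\<lambda>J. if J \<noteq> {} \<and> J \<subseteq> {0..m}
            then (\<lambda>k \<beta>. if \<beta> \<in> delta_simp J k
                         then phiS Fob Fhom n z (\<alpha> ` J) k (\<lambda>p. if p \<le> k then \<alpha> (\<beta> p) else 0)
                         else undefined)
            else (\<lambda>k \<beta>. undefined))"
  proof (intro ext)
    fix J k \<beta>
    show "phiS Fob Fhom m ?z J k \<beta> = (if J \<noteq> {} \<and> J \<subseteq> {0..m}
            then (\<lambda>k \<beta>. if \<beta> \<in> delta_simp J k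
                         then phiS Fob Fhom n z (\<alpha> ` J) k (\<lambda>p. if p \<le> k then \<alpha> (\<beta> p) else 0)
                         else undefined)
            else (\<lambda>k \<beta>. undefined)) k \<beta>"
    proof (cases "J \<noteq> {} \<and> J \<subseteq> {0..m} \<and> \<beta> \<in> delta_simp J k")
      case False
      then show ?thesis by (auto simp: phiS_def)
    next
      case True
      then have J: "J \<noteq> {}" "J \<subseteq> {0..m}" and \<beta>: "\<beta> \<in> delta_simp J k" by auto
      let ?\<gamma> = "\<lambda>p. if p \<le> k then \<alpha> (\<beta> p) else 0"
      have tJ: "Max J \<in> J" "Max J \<le> m" using JMax[OF J] by auto
      have bt: "\<And>p. p \<le> k \<Longrightarrow> \<beta> p \<le> Max J" using ds_mem[OF \<beta>] JMax_ge[OF J(2)] by simp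
      have bm: "\<And>p q. p \<le> q \<Longrightarrow> q \<le> k \<Longrightarrow> \<beta> p \<le> \<beta> q" using ds_mono[OF \<beta>] .
      have bmm: "\<And>p. p \<le> k \<Longrightarrow> \<beta> p \<le> m" using bt tJ by (meson order_trans)
      have aJ: "\<alpha> ` J \<noteq> {}" "\<alpha> ` J \<subseteq> {0..n}" using J am by auto
      have Maxa: "Max (\<alpha> ` J) = \<alpha> (Max J)"
      proof (rule Max_eqI)
        show "finite (\<alpha> ` J)" using Jfin[OF J(2)] by simp
        show "\<alpha> (Max J) \<in> \<alpha> ` J" using tJ by simp
        fix y assume "y \<in> \<alpha> ` J"
        then obtain x where "x \<in> J" "y = \<alpha> x" by blast
        then show "y \<le> \<alpha> (Max J)" using JMax_ge[OF J(2)] amono tJ by simp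
      qed
      have \<gamma>: "?\<gamma> \<in> delta_simp (\<alpha> ` J) k"
        using \<beta> amono bmm unfolding delta_simp_def by auto
      have vimg: "valid_chain (\<beta> p) (\<beta> q) kk (\<lambda>l. \<beta> ` T l)" if "p \<le> q" "q \<le> k" "valid_chain p q kk T" for p q kk T
        using that by (intro vc_image) (auto intro: bm)
      have F: "fst (phiS Fob Fhom m ?z J k \<beta>) = fst (phiS Fob Fhom n z (\<alpha> ` J) k ?\<gamma>)"
        unfolding phiS_fst[OF J \<beta>] phiS_fst[OF aJ \<gamma>] Maxa fz
        using dm bt tJ bmm by (auto simp: fun_eq_iff)
      have S: "snd (phiS Fob Fhom m ?z J k \<beta>) = snd (phiS Fob Fhom n z (\<alpha> ` J) k ?\<gamma>)"
      proof (intro ext)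
        fix p q kk T
        show "snd (phiS Fob Fhom m ?z J k \<beta>) p q kk T = snd (phiS Fob Fhom n z (\<alpha> ` J) k ?\<gamma>) p q kk T"
        proof (cases "p \<le> q \<and> q \<le> k \<and> valid_chain p q kk T")
          case True
          then have pq: "p \<le> q" "q \<le> k" "valid_chain p q kk T" by auto
          have e1: "(\<lambda>l. ?\<gamma> ` T l) = (\<lambda>l. (\<lambda>l. \<alpha> ` (\<lambda>l. \<beta> ` T l) l) l)"
            using img_restrict[OF pq(3) pq(2), of "\<lambda>p. \<alpha> (\<beta> p)"] by (simp add: image_image)
          have s1: "snd ?z (\<beta> p) (\<beta> q) kk (\<lambda>l. \<beta> ` T l) = snd z (\<alpha> (\<beta> p)) (\<alpha> (\<beta> q)) kk (\<lambda>l. \<alpha> ` (\<lambda>l. \<beta> ` T l) l)"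
            by (rule sz) (use pq bm bmm vimg[OF pq] in auto)
          show ?thesis unfolding phiS_snd[OF J \<beta>] phiS_snd[OF aJ \<gamma>] Maxa fz
            using pq s1 e1 dm bt tJ bmm bm by simp
        next
          case False
          then show ?thesis unfolding phiS_snd[OF J \<beta>] phiS_snd[OF aJ \<gamma>] by (simp only: if_not_P if_False)
        qed
      qed
      show ?thesis using True F S by (simp add: prod_eq_iff)
    qed
  qed
  show ?thesis unfolding Phi_def rel_act_def prod.case 1 2 3 by simp
qed


lemma PsiPhi: "Psi n (Phi Fob Fhom n z) = z"
proof -
  have sS: "snd (snd (Phi Fob Fhom n z)) = phiS Fob Fhom n z" by (simp add: Phi_def)
  have f1: "fst (Phi Fob Fhom n z) = (\<lambda>i. if i \<le> n then snd (fst z i) else undefined)" by (simp add: Phi_def gr_proj_eq)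
  have f2: "fst (snd (Phi Fob Fhom n z)) = gr_dm n z" by (simp add: Phi_def gr_proj_eq)
  have X: "(\<lambda>i. if i \<le> n then (fst (snd (snd (Phi Fob Fhom n z)) {i} 0 (vtx i)) 0, fst (Phi Fob Fhom n z) i) else undefined) = fst z"
  proof
    fix i show "(if i \<le> n then (fst (snd (snd (Phi Fob Fhom n z)) {i} 0 (vtx i)) 0, fst (Phi Fob Fhom n z) i) else undefined) = fst z i"
    proof (cases "i \<le> n")
      case True
      have J: "{i} \<noteq> {}" "{i} \<subseteq> {0..n}" using True by auto
      show ?thesis unfolding sS f1 phiS_fst[OF J vtx_ds] using True Fob_dm_id[OF True Za[OF True]]
        by (simp add: vtx_def)
    next
      case False then show ?thesis using hc_obj_undef[OF z False] by simp
    qed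
  qed
  have S: "(\<lambda>i j k S. if i \<le> j \<and> j \<le> n \<and> valid_chain i j k S then
         (snd (snd (snd (Phi Fob Fhom n z)) {i..j} (j - i) (iota i j)) 0 (j - i) k (\<lambda>l. (\<lambda>t. t - i) ` S l), fst (snd (Phi Fob Fhom n z)) i j)
       else undefined) = snd z"
  proof (intro ext)
    fix i j k S
    show "(if i \<le> j \<and> j \<le> n \<and> valid_chain i j k S then
         (snd (snd (snd (Phi Fob Fhom n z)) {i..j} (j - i) (iota i j)) 0 (j - i) k (\<lambda>l. (\<lambda>t. t - i) ` S l), fst (snd (Phi Fob Fhom n z)) i j)
       else undefined) = snd z i j k S"
    proof (cases "i \<le> j \<and> j \<le> n \<and> valid_chain i j k S")
      case True
      then have ij: "i \<le> j" "j \<le> n" "valid_chain i j k S" by auto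
      have J: "{i..j} \<noteq> {}" "{i..j} \<subseteq> {0..n}" using ij by auto
      have v: "valid_chain 0 (j - i) k (\<lambda>l. (\<lambda>t. t - i) ` S l)" by (rule vc_shift[OF ij(3)])
      have in1: "fst (snd z i j k S) \<in> ssimp (shom (Fo (snd (fst z j))) (Fob (gr_dm n z i j) (fst (fst z i))) (fst (fst z j))) k"
        by (rule Zin'[OF z ij])
      have Xi: "Fob (gr_dm n z i j) (fst (fst z i)) \<in> sobj (Fo (snd (fst z j)))" using ij by (intro Fob_dm_in Za) auto
      have e: "snd (snd (snd (Phi Fob Fhom n z)) {i..j} (j - i) (iota i j)) 0 (j - i) k (\<lambda>l. (\<lambda>t. t - i) ` S l) = fst (snd z i j k S)"
        unfolding sS phiS_snd[OF J iota_ds[OF ij(1)]] Max_interval[OF ij(1)] iota_shift[OF ij(3)]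
          iota_0 iota_top[OF ij(1)]
        using v Fhom_dm_id[OF ij(2) Xi Za[OF ij(2)] in1] by simp
      show ?thesis unfolding f2 e using True Zconst[OF z ij] by (simp add: prod_eq_iff)
    next
      case False then show ?thesis unfolding hc_undef[OF z False] by (rule if_not_P)
    qed
  qed
  show ?thesis unfolding Psi_def X S by simp
qed

end

section \<open>Simplices of the relative nerve\<close>

context fixes d dm s n
  assumes r: "(d, dm, s) \<in> rel_simp D (\<lambda>c. hc_nerve (Fo c)) (\<lambda>\<phi>. hc_nerve_map (Fob \<phi>) (Fhom \<phi>)) n"
begin

lemma R_ord: "(d, dm) \<in> ord_simp D n" using relD(1)[OF r] .
lemma R_ob: "i \<le> n \<Longrightarrow> d i \<in> cat_ob D" using ordD(1)[OF R_ord] by blast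
lemma R_ob_undef: "\<not> i \<le> n \<Longrightarrow> d i = undefined" using ordD(2)[OF R_ord] by simp
lemma R_hom: "i \<le> j \<Longrightarrow> j \<le> n \<Longrightarrow> dm i j \<in> cat_hom D (d i) (d j)" using ordD(3)[OF R_ord] by blast
lemma R_hom_undef: "\<not> (i \<le> j \<and> j \<le> n) \<Longrightarrow> dm i j = undefined" using ordD(4)[OF R_ord] by blast
lemma R_id: "i \<le> n \<Longrightarrow> dm i i = cat_id D (d i)" using ordD(5)[OF R_ord] by blast
lemma R_comp: "i \<le> j \<Longrightarrow> j \<le> k \<Longrightarrow> k \<le> n \<Longrightarrow> dm i k = cat_comp D (d i) (d j) (d k) (dm i j) (dm j k)"
  using ordD(6)[OF R_ord] by blast

lemma R_map: "J \<noteq> {} \<Longrightarrow> J \<subseteq> {0..n} \<Longrightarrow> sset_map (delta J) (hc_nerve (Fo (d (Max J)))) (s J)"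
  using relD(2)[OF r] by blast
lemma R_in: "J \<noteq> {} \<Longrightarrow> J \<subseteq> {0..n} \<Longrightarrow> \<beta> \<in> delta_simp J m \<Longrightarrow> s J m \<beta> \<in> hc_simp (Fo (d (Max J))) m"
  using smapD(1)[OF R_map] by simp
lemma R_nat: "J \<noteq> {} \<Longrightarrow> J \<subseteq> {0..n} \<Longrightarrow> mono_map m' m \<alpha> \<Longrightarrow> \<beta> \<in> delta_simp J m \<Longrightarrow>
   s J m' (\<lambda>p. if p \<le> m' then \<beta> (\<alpha> p) else 0) = hc_act m' m \<alpha> (s J m \<beta>)"
  using smapD(2)[OF R_map] by simp
lemma R_undef: "J \<noteq> {} \<Longrightarrow> J \<subseteq> {0..n} \<Longrightarrow> \<beta> \<notin> delta_simp J m \<Longrightarrow> s J m \<beta> = undefined"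
  using smapD(3)[OF R_map] by simp
lemma R_inv: "\<not> (J \<noteq> {} \<and> J \<subseteq> {0..n}) \<Longrightarrow> s J = (\<lambda>m \<beta>. undefined)"
  using relD(3)[OF r] by blast
lemma R_compat: "I \<noteq> {} \<Longrightarrow> I \<subseteq> J \<Longrightarrow> J \<subseteq> {0..n} \<Longrightarrow> \<beta> \<in> delta_simp I m \<Longrightarrow>
   hc_nerve_map (Fob (dm (Max I) (Max J))) (Fhom (dm (Max I) (Max J))) m (s I m \<beta>) = s J m \<beta>"
  using relD(4)[OF r] by blast

lemma RFob_in: "a \<le> b \<Longrightarrow> b \<le> n \<Longrightarrow> X \<in> sobj (Fo (d a)) \<Longrightarrow> Fob (dm a b) X \<in> sobj (Fo (d b))"
  using Fob_in[OF R_ob R_ob R_hom] by simp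
lemma RFhom_in: "a \<le> b \<Longrightarrow> b \<le> n \<Longrightarrow> X \<in> sobj (Fo (d a)) \<Longrightarrow> Y \<in> sobj (Fo (d a)) \<Longrightarrow>
    f \<in> ssimp (shom (Fo (d a)) X Y) k \<Longrightarrow>
    Fhom (dm a b) k X Y f \<in> ssimp (shom (Fo (d b)) (Fob (dm a b) X) (Fob (dm a b) Y)) k"
  using Fhom_in[OF R_ob R_ob R_hom] by simp
lemma RFob_comp: "a \<le> b \<Longrightarrow> b \<le> c \<Longrightarrow> c \<le> n \<Longrightarrow> X \<in> sobj (Fo (d a)) \<Longrightarrow>
    Fob (dm b c) (Fob (dm a b) X) = Fob (dm a c) X"
proof -
  assume a: "a \<le> b" "b \<le> c" "c \<le> n" and X: "X \<in> sobj (Fo (d a))"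
  have "Fob (dm a c) X = Fob (cat_comp D (d a) (d b) (d c) (dm a b) (dm b c)) X" using R_comp[OF a] by simp
  also have "\<dots> = Fob (dm b c) (Fob (dm a b) X)" using a by (intro Fob_comp R_ob R_hom X) simp_all
  finally show ?thesis by simp
qed
lemma RFhom_comp: "a \<le> b \<Longrightarrow> b \<le> c \<Longrightarrow> c \<le> n \<Longrightarrow> X \<in> sobj (Fo (d a)) \<Longrightarrow> Y \<in> sobj (Fo (d a)) \<Longrightarrow>
    f \<in> ssimp (shom (Fo (d a)) X Y) k \<Longrightarrow>
    Fhom (dm b c) k (Fob (dm a b) X) (Fob (dm a b) Y) (Fhom (dm a b) k X Y f) = Fhom (dm a c) k X Y f"
proof -
  assume a: "a \<le> b" "b \<le> c" "c \<le> n" and X: "X \<in> sobj (Fo (d a))" and Y: "Y \<in> sobj (Fo (d a))"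
    and f: "f \<in> ssimp (shom (Fo (d a)) X Y) k"
  have "Fhom (dm a c) k X Y f = Fhom (cat_comp D (d a) (d b) (d c) (dm a b) (dm b c)) k X Y f" using R_comp[OF a] by simp
  also have "\<dots> = Fhom (dm b c) k (Fob (dm a b) X) (Fob (dm a b) Y) (Fhom (dm a b) k X Y f)"
    using a by (intro Fhom_comp R_ob R_hom X Y f) simp_all
  finally show ?thesis by simp
qed
lemma RFob_id: "a \<le> n \<Longrightarrow> X \<in> sobj (Fo (d a)) \<Longrightarrow> Fob (dm a a) X = X"
  using R_id Fob_id R_ob by simp
lemma RFhom_id: "a \<le> n \<Longrightarrow> X \<in> sobj (Fo (d a)) \<Longrightarrow> Y \<in> sobj (Fo (d a)) \<Longrightarrow>
    f \<in> ssimp (shom (Fo (d a)) X Y) k \<Longrightarrow> Fhom (dm a a) k X Y f = f"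
  using R_id Fhom_id R_ob by simp

lemma R_same: assumes I: "I \<noteq> {}" "I \<subseteq> J" and J: "J \<subseteq> {0..n}" and M: "Max I = Max J" and \<beta>: "\<beta> \<in> delta_simp I m"
  shows "s I m \<beta> = s J m \<beta>"
proof -
  have I0: "I \<subseteq> {0..n}" using I J by auto
  have tn: "Max I \<le> n" using JMax[OF I(1) I0] by simp
  have "s J m \<beta> = hc_nerve_map (Fob (dm (Max I) (Max J))) (Fhom (dm (Max I) (Max J))) m (s I m \<beta>)"
    using R_compat[OF I J \<beta>] by simp
  also have "\<dots> = s I m \<beta>" unfolding M[symmetric] R_id[OF tn]
    by (rule fm_id[OF R_ob[OF tn] R_in[OF I(1) I0 \<beta>]])
  finally show ?thesis by simp
qed

lemma R_A: "i \<le> n \<Longrightarrow> relA s i \<in> sobj (Fo (d i))"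
proof -
  assume i: "i \<le> n"
  have J: "{i} \<noteq> {}" "{i} \<subseteq> {0..n}" using i by auto
  have "s {i} 0 (vtx i) \<in> hc_simp (Fo (d i)) 0" using R_in[OF J vtx_ds] by simp
  then show ?thesis unfolding relA_def by (rule hc_obj) simp
qed

lemma RV: assumes J: "J \<noteq> {}" "J \<subseteq> {0..n}" and \<beta>: "\<beta> \<in> delta_simp J m" and p: "p \<le> m"
  shows "fst (s J m \<beta>) p = Fob (dm (\<beta> p) (Max J)) (relA s (\<beta> p))"
proof -
  have bJ: "\<beta> p \<in> J" using ds_mem[OF \<beta> p] .
  have I: "{\<beta> p} \<noteq> {}" "{\<beta> p} \<subseteq> J" using bJ by auto
  have e: "(\<lambda>q. if q \<le> 0 then \<beta> p else 0) = vtx (\<beta> p)" by (simp add: vtx_def fun_eq_iff)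
  have n0: "s J 0 (\<lambda>q. if q \<le> 0 then \<beta> p else 0) = hc_act 0 m (\<lambda>_. p) (s J m \<beta>)"
    by (rule R_nat[OF J mono_map_const[OF p] \<beta>])
  have "fst (s J m \<beta>) p = fst (hc_act 0 m (\<lambda>_. p) (s J m \<beta>)) 0" by (simp add: hc_act_fst)
  also have "\<dots> = fst (s J 0 (vtx (\<beta> p))) 0" unfolding n0[unfolded e, symmetric] ..
  also have "\<dots> = fst (hc_nerve_map (Fob (dm (\<beta> p) (Max J))) (Fhom (dm (\<beta> p) (Max J))) 0 (s {\<beta> p} 0 (vtx (\<beta> p)))) 0"
    using R_compat[OF I J(2) vtx_ds] by simp
  also have "\<dots> = Fob (dm (\<beta> p) (Max J)) (relA s (\<beta> p))" by (simp add: hnm_fst relA_def)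
  finally show ?thesis .
qed

lemma RW_in: "i \<le> j \<Longrightarrow> j \<le> n \<Longrightarrow> s {i..j} (j - i) (iota i j) \<in> hc_simp (Fo (d j)) (j - i)"
  using R_in[of "{i..j}", OF _ _ iota_ds] Max_interval by simp

lemma RW0: "i \<le> j \<Longrightarrow> j \<le> n \<Longrightarrow> fst (s {i..j} (j - i) (iota i j)) 0 = Fob (dm i j) (relA s i)"
  using RV[of "{i..j}", OF _ _ iota_ds] Max_interval by (simp add: iota_0)

lemma RWt: "i \<le> j \<Longrightarrow> j \<le> n \<Longrightarrow> fst (s {i..j} (j - i) (iota i j)) (j - i) = relA s j"
  using RV[of "{i..j}", OF _ _ iota_ds] Max_interval RFob_id R_A by (simp add: iota_top)

lemma RD: assumes J: "J \<noteq> {}" "J \<subseteq> {0..n}" and \<beta>: "\<beta> \<in> delta_simp J m"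
    and pq: "p \<le> q" "q \<le> m" and T: "valid_chain p q k T"
  shows "snd (s J m \<beta>) p q k T = Fhom (dm (\<beta> q) (Max J)) k
     (fst (s {\<beta> p..\<beta> q} (\<beta> q - \<beta> p) (iota (\<beta> p) (\<beta> q))) 0)
     (fst (s {\<beta> p..\<beta> q} (\<beta> q - \<beta> p) (iota (\<beta> p) (\<beta> q))) (\<beta> q - \<beta> p))
     (snd (s {\<beta> p..\<beta> q} (\<beta> q - \<beta> p) (iota (\<beta> p) (\<beta> q))) 0 (\<beta> q - \<beta> p) k (\<lambda>l. (\<lambda>x. x - \<beta> p) ` \<beta> ` T l))"
proof -
  define a where "a = \<beta> p"
  define b where "b = \<beta> q"
  define W where "W = s {a..b} (b - a) (iota a b)"
  define \<alpha> where "\<alpha> = (\<lambda>r::nat. p + r)"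
  define T' where "T' = (\<lambda>l. (\<lambda>x. x - p) ` T l)"
  define \<beta>1 where "\<beta>1 = (\<lambda>r. if r \<le> q - p then \<beta> (\<alpha> r) else 0)"
  define \<gamma> where "\<gamma> = (\<lambda>r. if r \<le> q - p then \<beta> (p + r) - a else 0)"
  define \<phi> where "\<phi> = dm b (Max J)"
  have ab: "a \<le> b" unfolding a_def b_def using ds_mono[OF \<beta> pq] .
  have tJ: "Max J \<in> J" "Max J \<le> n" using JMax[OF J] by auto
  have bt: "b \<le> Max J" unfolding b_def using ds_mem[OF \<beta> pq(2)] JMax_ge[OF J(2)] by simp
  have bn: "b \<le> n" using bt tJ by simp
  have mo\<alpha>: "mono_map (q - p) m \<alpha>" unfolding mono_map_def \<alpha>_def using pq by auto
  have vT': "valid_chain 0 (q - p) k T'" using vc_shift2[OF order_refl T] unfolding T'_def by simp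
  have aT': "(\<lambda>l. \<alpha> ` T' l) = T"
  proof (rule ext)
    fix l
    have sub: "T l \<subseteq> {p..q}" by (rule chain_sub[OF T])
    have "\<alpha> ` T' l = (\<lambda>x. \<alpha> (x - p)) ` T l" unfolding T'_def by (simp add: image_image)
    also have "\<dots> = id ` T l"
    proof (rule image_cong)
      fix x assume "x \<in> T l" then have "p \<le> x" using sub by auto
      then show "\<alpha> (x - p) = id x" by (simp add: \<alpha>_def)
    qed simp
    finally show "\<alpha> ` T' l = T l" by simp
  qed
  have s1: "snd (s J m \<beta>) p q k T = snd (hc_act (q - p) m \<alpha> (s J m \<beta>)) 0 (q - p) k T'"
    using hc_act_snd[OF le0 order_refl vT', of m \<alpha> "s J m \<beta>"] aT' pq by (simp add: \<alpha>_def)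
  have s2: "hc_act (q - p) m \<alpha> (s J m \<beta>) = s J (q - p) \<beta>1"
    unfolding \<beta>1_def by (rule R_nat[OF J mo\<alpha> \<beta>, symmetric])
  define I1 where "I1 = \<beta> ` {p..q}"
  have I1ne: "I1 \<noteq> {}" unfolding I1_def using pq by auto
  have I1J: "I1 \<subseteq> J" unfolding I1_def using ds_mem[OF \<beta>] pq by auto
  have I1ab: "I1 \<subseteq> {a..b}" unfolding I1_def a_def b_def using ds_mono[OF \<beta>] pq by auto
  have abn: "{a..b} \<subseteq> {0..n}" using bn by auto
  have MI1: "Max I1 = b"
  proof (rule Max_eqI)
    show "finite I1" unfolding I1_def by simp
    show "b \<in> I1" unfolding I1_def b_def using pq by auto
    fix y assume "y \<in> I1" then show "y \<le> b" using I1ab by auto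
  qed
  have \<beta>1I: "\<beta>1 \<in> delta_simp I1 (q - p)"
    unfolding delta_simp_def \<beta>1_def I1_def \<alpha>_def using ds_mono[OF \<beta>] pq by auto
  have s3: "s J (q - p) \<beta>1 = hc_nerve_map (Fob \<phi>) (Fhom \<phi>) (q - p) (s I1 (q - p) \<beta>1)"
    using R_compat[OF I1ne I1J J(2) \<beta>1I] MI1 unfolding \<phi>_def by simp
  have s4: "s I1 (q - p) \<beta>1 = s {a..b} (q - p) \<beta>1"
    by (rule R_same[OF I1ne I1ab abn _ \<beta>1I]) (simp add: MI1 Max_interval[OF ab])
  have mo\<gamma>: "mono_map (q - p) (b - a) \<gamma>"
    unfolding mono_map_def \<gamma>_def a_def b_def using ds_mono[OF \<beta>] pq by (auto intro: diff_le_mono)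
  have e\<beta>1: "\<beta>1 = (\<lambda>r. if r \<le> q - p then iota a b (\<gamma> r) else 0)"
  proof (rule ext)
    fix r show "\<beta>1 r = (if r \<le> q - p then iota a b (\<gamma> r) else 0)"
    proof (cases "r \<le> q - p")
      case True
      have "a \<le> \<beta> (p + r)" "\<beta> (p + r) \<le> b" unfolding a_def b_def using ds_mono[OF \<beta>] pq True by auto
      moreover from this have "\<beta> (p + r) - a \<le> b - a" by (simp add: diff_le_mono)
      ultimately show ?thesis using True unfolding \<beta>1_def \<gamma>_def iota_def \<alpha>_def by simp
    next
      case False then show ?thesis unfolding \<beta>1_def by simp
    qed
  qed
  have s5: "s {a..b} (q - p) \<beta>1 = hc_act (q - p) (b - a) \<gamma> W"
    unfolding e\<beta>1 W_def by (rule R_nat[OF _ abn mo\<gamma> iota_ds[OF ab]]) (use ab in simp)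
  have g0: "\<gamma> 0 = 0" unfolding \<gamma>_def a_def by simp
  have gt: "\<gamma> (q - p) = b - a" unfolding \<gamma>_def b_def using pq by simp
  have gT: "(\<lambda>l. \<gamma> ` T' l) = (\<lambda>l. (\<lambda>x. x - a) ` \<beta> ` T l)"
  proof (rule ext)
    fix l
    have sub: "T l \<subseteq> {p..q}" by (rule chain_sub[OF T])
    have "\<gamma> ` T' l = (\<lambda>x. \<gamma> (x - p)) ` T l" unfolding T'_def by (simp add: image_image)
    also have "\<dots> = (\<lambda>x. \<beta> x - a) ` T l"
    proof (rule image_cong)
      fix x assume "x \<in> T l" then have "p \<le> x" "x \<le> q" using sub by auto
      then show "\<gamma> (x - p) = \<beta> x - a" unfolding \<gamma>_def by (simp add: diff_le_mono)
    qed simp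
    also have "\<dots> = (\<lambda>x. x - a) ` \<beta> ` T l" by (simp add: image_image)
    finally show "\<gamma> ` T' l = (\<lambda>x. x - a) ` \<beta> ` T l" .
  qed
  have "snd (s J m \<beta>) p q k T = snd (hc_nerve_map (Fob \<phi>) (Fhom \<phi>) (q - p) (hc_act (q - p) (b - a) \<gamma> W)) 0 (q - p) k T'"
    unfolding s1 s2 s3 s4 s5 ..
  also have "\<dots> = Fhom \<phi> k (fst W 0) (fst W (b - a)) (snd W 0 (b - a) k (\<lambda>l. (\<lambda>x. x - a) ` \<beta> ` T l))"
    unfolding hnm_snd[OF le0 order_refl vT'] hc_act_fst[OF le0] hc_act_fst[OF order_refl] hc_act_snd[OF le0 order_refl vT']
      g0 gt gT ..
  finally show ?thesis unfolding W_def \<phi>_def a_def b_def .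
qed

lemma Psi_fst: "i \<le> n \<Longrightarrow> fst (Psi n (d, dm, s)) i = (relA s i, d i)"
  by (simp add: Psi_def relA_def)
lemma Psi_fst_undef: "\<not> i \<le> n \<Longrightarrow> fst (Psi n (d, dm, s)) i = undefined"
  by (simp add: Psi_def)
lemma Psi_snd: "i \<le> j \<Longrightarrow> j \<le> n \<Longrightarrow> valid_chain i j k S \<Longrightarrow> snd (Psi n (d, dm, s)) i j k S =
   (snd (s {i..j} (j - i) (iota i j)) 0 (j - i) k (\<lambda>l. (\<lambda>t. t - i) ` S l), dm i j)"
  by (simp add: Psi_def)
lemma Psi_snd_undef: "\<not> (i \<le> j \<and> j \<le> n \<and> valid_chain i j k S) \<Longrightarrow> snd (Psi n (d, dm, s)) i j k S = undefined"
  unfolding Psi_def snd_conv by (rule if_not_P)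

lemma iota_val: "p \<le> j - i \<Longrightarrow> iota i j p = i + p" by (simp add: iota_def)

lemma Rtau_in: "i \<le> j \<Longrightarrow> j \<le> n \<Longrightarrow> valid_chain i j k S \<Longrightarrow>
  snd (s {i..j} (j - i) (iota i j)) 0 (j - i) k (\<lambda>l. (\<lambda>t. t - i) ` S l)
    \<in> ssimp (shom (Fo (d j)) (Fob (dm i j) (relA s i)) (relA s j)) k"
proof -
  assume ij: "i \<le> j" "j \<le> n" and v: "valid_chain i j k S"
  have "snd (s {i..j} (j - i) (iota i j)) 0 (j - i) k (\<lambda>l. (\<lambda>t. t - i) ` S l)
    \<in> ssimp (shom (Fo (d j)) (fst (s {i..j} (j - i) (iota i j)) 0) (fst (s {i..j} (j - i) (iota i j)) (j - i))) k"
    by (rule hc_in[OF RW_in[OF ij] le0 order_refl vc_shift[OF v]])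
  then show ?thesis unfolding RW0[OF ij] RWt[OF ij] .
qed

lemma PsiIn: "Psi n (d, dm, s) \<in> hc_simp G n"
  unfolding hc_simp_iff
proof (intro conjI allI impI)
  fix i assume i: "i \<le> n"
  show "fst (Psi n (d, dm, s)) i \<in> sobj G" unfolding Psi_fst[OF i] gr_sobj using R_ob[OF i] R_A[OF i] by simp
next
  fix i assume "n < i" then show "fst (Psi n (d, dm, s)) i = undefined" using Psi_fst_undef by simp
next
  fix i j k S assume ij: "i \<le> j" "j \<le> n" "valid_chain i j k S"
  have "i \<le> n" using ij by simp
  show "snd (Psi n (d, dm, s)) i j k S \<in> ssimp (shom G (fst (Psi n (d, dm, s)) i) (fst (Psi n (d, dm, s)) j)) k"
    unfolding Psi_snd[OF ij] Psi_fst[OF \<open>i \<le> n\<close>] Psi_fst[OF ij(2)] gr_ssimp fst_conv snd_conv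
    using R_hom[OF ij(1,2)] Rtau_in[OF ij] by simp
next
  fix i j k S assume "\<not> (i \<le> j \<and> j \<le> n \<and> valid_chain i j k S)"
  then show "snd (Psi n (d, dm, s)) i j k S = undefined" by (rule Psi_snd_undef)
next
  fix i j k k' S \<beta>' assume ij: "i \<le> j" "j \<le> n" "valid_chain i j k S" and mo: "mono_map k' k \<beta>'"
  have "i \<le> n" using ij by simp
  have v': "valid_chain i j k' (\<lambda>l. if l \<le> k' then S (\<beta>' l) else {})" by (rule vc_sact[OF ij(3) mo])
  have img: "(\<lambda>l. (\<lambda>t. t - i) ` (if l \<le> k' then S (\<beta>' l) else {})) =
      (\<lambda>l. if l \<le> k' then (\<lambda>l. (\<lambda>t. t - i) ` S l) (\<beta>' l) else {})" by (simp add: fun_eq_iff)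
  have hs: "sact (shom (Fo (d j)) (Fob (dm i j) (relA s i)) (relA s j)) k' k \<beta>'
      (snd (s {i..j} (j - i) (iota i j)) 0 (j - i) k (\<lambda>l. (\<lambda>t. t - i) ` S l)) =
      snd (s {i..j} (j - i) (iota i j)) 0 (j - i) k' (\<lambda>l. if l \<le> k' then (\<lambda>l. (\<lambda>t. t - i) ` S l) (\<beta>' l) else {})"
    using hc_sact[OF RW_in[OF ij(1,2)] le0 order_refl vc_shift[OF ij(3)] mo] RW0[OF ij(1,2)] RWt[OF ij(1,2)] by simp
  show "sact (shom G (fst (Psi n (d, dm, s)) i) (fst (Psi n (d, dm, s)) j)) k' k \<beta>' (snd (Psi n (d, dm, s)) i j k S) =
      snd (Psi n (d, dm, s)) i j k' (\<lambda>l. if l \<le> k' then S (\<beta>' l) else {})"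
    unfolding Psi_snd[OF ij] Psi_snd[OF ij(1,2) v'] Psi_fst[OF \<open>i \<le> n\<close>] Psi_fst[OF ij(2)] gr_sact fst_conv snd_conv
      img hs ..
next
  fix i j l k S T assume ijl: "i \<le> j" "j \<le> l" "l \<le> n" and vS: "valid_chain i j k S" and vT: "valid_chain j l k T"
  have il: "i \<le> l" and jn: "j \<le> n" and iN: "i \<le> n" using ijl by auto
  let ?A = "relA s"
  let ?Wil = "s {i..l} (l - i) (iota i l)"
  let ?Wij = "s {i..j} (j - i) (iota i j)"
  let ?Wjl = "s {j..l} (l - j) (iota j l)"
  let ?Si = "\<lambda>p. (\<lambda>t. t - i) ` S p"
  let ?Ti = "\<lambda>p. (\<lambda>t. t - i) ` T p"
  let ?Tj = "\<lambda>p. (\<lambda>t. t - j) ` T p"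
  have vS': "valid_chain 0 (j - i) k ?Si" by (rule vc_shift[OF vS])
  have vT': "valid_chain (j - i) (l - i) k ?Ti" by (rule vc_shift2[OF ijl(1) vT])
  have vU: "valid_chain i l k (\<lambda>p. S p \<union> T p)" by (rule vc_union[OF vS vT])
  have jil: "j - i \<le> l - i" using ijl by simp
  have Jil: "{i..l} \<noteq> {}" "{i..l} \<subseteq> {0..n}" using il ijl by auto
  have io1: "iota i l (j - i) = j" using iota_val[OF jil] ijl by simp
  have io2: "iota i l (l - i) = l" using iota_val[of "l - i" l i] ijl by simp
  have c1: "scomp (Fo (d l)) (fst ?Wil 0) (fst ?Wil (j - i)) (fst ?Wil (l - i)) k
       (snd ?Wil 0 (j - i) k ?Si) (snd ?Wil (j - i) (l - i) k ?Ti) = snd ?Wil 0 (l - i) k (\<lambda>p. ?Si p \<union> ?Ti p)"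
    by (rule hc_comp[OF RW_in[OF il ijl(3)] le0 jil order_refl vS' vT'])
  have shS: "(\<lambda>l'. iota i l ` ?Si l') = S" by (rule iota_shift2[OF vS order_refl ijl(2)])
  have shT: "(\<lambda>l'. iota i l ` ?Ti l') = T" by (rule iota_shift2[OF vT ijl(1) order_refl])
  have shS1: "\<And>x. iota i l ` (\<lambda>t. t - i) ` S x = S x" using shS by (simp add: fun_eq_iff)
  have shT1: "\<And>x. iota i l ` (\<lambda>t. t - i) ` T x = T x" using shT by (simp add: fun_eq_iff)
  have rd1: "snd ?Wil 0 (j - i) k ?Si = Fhom (dm j l) k (Fob (dm i j) (?A i)) (?A j) (snd ?Wij 0 (j - i) k ?Si)"
    using RD[OF Jil iota_ds[OF il] le0 jil vS'] shS1 io1 RW0[OF ijl(1) jn] RWt[OF ijl(1) jn] Max_interval[OF il]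
    by (simp add: iota_0)
  have tjl: "snd ?Wjl 0 (l - j) k ?Tj \<in> ssimp (shom (Fo (d l)) (Fob (dm j l) (?A j)) (?A l)) k"
    by (rule Rtau_in[OF ijl(2,3) vT])
  have rd2: "snd ?Wil (j - i) (l - i) k ?Ti = snd ?Wjl 0 (l - j) k ?Tj"
  proof -
    have "snd ?Wil (j - i) (l - i) k ?Ti = Fhom (dm l l) k (Fob (dm j l) (?A j)) (?A l) (snd ?Wjl 0 (l - j) k ?Tj)"
      using RD[OF Jil iota_ds[OF il] jil order_refl vT'] shT1 io1 io2 RW0[OF ijl(2,3)] RWt[OF ijl(2,3)] Max_interval[OF il]
      by simp
    also have "\<dots> = snd ?Wjl 0 (l - j) k ?Tj"
      by (rule RFhom_id[OF ijl(3) RFob_in[OF ijl(2,3) R_A[OF jn]] R_A[OF ijl(3)] tjl])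
    finally show ?thesis .
  qed
  have o1: "fst ?Wil 0 = Fob (dm j l) (Fob (dm i j) (?A i))"
    using RW0[OF il ijl(3)] RFob_comp[OF ijl R_A[OF iN]] by simp
  have o2: "fst ?Wil (j - i) = Fob (dm j l) (?A j)"
    using RV[OF Jil iota_ds[OF il] jil] io1 Max_interval[OF il] by simp
  have o3: "fst ?Wil (l - i) = ?A l" by (rule RWt[OF il ijl(3)])
  have img: "(\<lambda>p. (\<lambda>t. t - i) ` (S p \<union> T p)) = (\<lambda>p. ?Si p \<union> ?Ti p)" by (simp add: image_Un)
  show "scomp G (fst (Psi n (d, dm, s)) i) (fst (Psi n (d, dm, s)) j) (fst (Psi n (d, dm, s)) l) k
        (snd (Psi n (d, dm, s)) i j k S) (snd (Psi n (d, dm, s)) j l k T) =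
       snd (Psi n (d, dm, s)) i l k (\<lambda>p. S p \<union> T p)"
    unfolding Psi_snd[OF ijl(1) jn vS] Psi_snd[OF ijl(2,3) vT] Psi_snd[OF il ijl(3) vU]
      Psi_fst[OF iN] Psi_fst[OF jn] Psi_fst[OF ijl(3)] gr_scomp fst_conv snd_conv img
    using c1 rd1 rd2 o1 o2 o3 R_comp[OF ijl] by simp
next
  fix i k :: nat assume i: "i \<le> n"
  let ?C = "\<lambda>p. if p \<le> k then {i} else {}"
  have v: "valid_chain i i k ?C" unfolding valid_chain_def by auto
  have img: "(\<lambda>l. (\<lambda>t. t - i) ` ?C l) = (\<lambda>p. if p \<le> k then {0} else {})" by (simp add: fun_eq_iff)
  have hi: "snd (s {i..i} (i - i) (iota i i)) 0 0 k (\<lambda>p. if p \<le> k then {0} else {}) =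
     degen0 (shom (Fo (d i)) (relA s i) (relA s i)) k (sid (Fo (d i)) (relA s i))"
    using hc_id[OF RW_in[OF order_refl i] le0, of k] RWt[OF order_refl i] by simp
  show "snd (Psi n (d, dm, s)) i i k ?C = degen0 (shom G (fst (Psi n (d, dm, s)) i) (fst (Psi n (d, dm, s)) i)) k
        (sid G (fst (Psi n (d, dm, s)) i))"
    unfolding Psi_snd[OF order_refl i v] Psi_fst[OF i] gr_degen0 gr_sid fst_conv snd_conv img
    using hi R_id[OF i] Fob_id[OF R_ob[OF i] R_A[OF i]] by simp
qed

lemma PhiPsi: "Phi Fob Fhom n (Psi n (d, dm, s)) = (d, dm, s)"
proof -
  let ?Z = "Psi n (d, dm, s)"
  have Z: "?Z \<in> hc_simp G n" by (rule PsiIn)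
  have dmZ: "gr_dm n ?Z = dm"
  proof (intro ext)
    fix i j show "gr_dm n ?Z i j = dm i j"
    proof (cases "i \<le> j \<and> j \<le> n")
      case True
      then have v: "valid_chain i j 0 (\<lambda>l. if l = 0 then {i, j} else {})" by (simp add: valid_chain_vertex)
      show ?thesis using True Psi_snd[OF _ _ v] by (simp add: gr_dm_def)
    next
      case False then show ?thesis unfolding gr_dm_def if_not_P[OF False] using R_hom_undef[OF False] by simp
    qed
  qed
  have dZ: "(\<lambda>i. if i \<le> n then snd (fst ?Z i) else undefined) = d"
    using Psi_fst R_ob_undef by (simp add: fun_eq_iff)
  have sZ: "phiS Fob Fhom n ?Z = s"
  proof (intro ext)
    fix J m \<beta>
    show "phiS Fob Fhom n ?Z J m \<beta> = s J m \<beta>"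
    proof (cases "J \<noteq> {} \<and> J \<subseteq> {0..n}")
      case False
      then have "\<not> (J \<noteq> {} \<and> J \<subseteq> {0..n} \<and> \<beta> \<in> delta_simp J m)" by blast
      then show ?thesis using R_inv[OF False] phiS_undef by simp
    next
      case True
      then have J: "J \<noteq> {}" "J \<subseteq> {0..n}" by auto
      show ?thesis
      proof (cases "\<beta> \<in> delta_simp J m")
        case False
        then have "\<not> (J \<noteq> {} \<and> J \<subseteq> {0..n} \<and> \<beta> \<in> delta_simp J m)" by blast
        then show ?thesis using R_undef[OF J False] phiS_undef by simp
      next
        case True
        note \<beta> = True
        have tn: "Max J \<le> n" using JMax[OF J] by simp
        have bt: "\<And>p. p \<le> m \<Longrightarrow> \<beta> p \<le> Max J" using ds_mem[OF \<beta>] JMax_ge[OF J(2)] by simp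
        have bn: "\<And>p. p \<le> m \<Longrightarrow> \<beta> p \<le> n" using bt tn by (meson order_trans)
        have bm: "\<And>p q. p \<le> q \<Longrightarrow> q \<le> m \<Longrightarrow> \<beta> p \<le> \<beta> q" using ds_mono[OF \<beta>] .
        have sin: "s J m \<beta> \<in> hc_simp (Fo (d (Max J))) m" by (rule R_in[OF J \<beta>])
        show ?thesis
        proof (rule prod_eqI)
          show "fst (phiS Fob Fhom n ?Z J m \<beta>) = fst (s J m \<beta>)"
          proof
            fix p show "fst (phiS Fob Fhom n ?Z J m \<beta>) p = fst (s J m \<beta>) p"
            proof (cases "p \<le> m")
              case True
              show ?thesis unfolding phiS_fst[OF J \<beta>] dmZ using True RV[OF J \<beta> True] Psi_fst[OF bn[OF True]] by simp
            next
              case False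
              show ?thesis unfolding phiS_fst[OF J \<beta>] using False hc_obj_undef[OF sin False] by simp
            qed
          qed
        next
          show "snd (phiS Fob Fhom n ?Z J m \<beta>) = snd (s J m \<beta>)"
          proof (intro ext)
            fix p q k T
            show "snd (phiS Fob Fhom n ?Z J m \<beta>) p q k T = snd (s J m \<beta>) p q k T"
            proof (cases "p \<le> q \<and> q \<le> m \<and> valid_chain p q k T")
              case True
              then have pq: "p \<le> q" "q \<le> m" "valid_chain p q k T" by auto
              have vi: "valid_chain (\<beta> p) (\<beta> q) k (\<lambda>l. \<beta> ` T l)"
                using pq by (intro vc_image) (auto intro: bm)
              have ab: "\<beta> p \<le> \<beta> q" by (rule bm[OF pq(1,2)])
              show ?thesis unfolding phiS_snd[OF J \<beta>] dmZ
                using pq Psi_snd[OF ab bn[OF pq(2)] vi] Psi_fst[OF bn[OF pq(2)]] Psi_fst[OF bn] RD[OF J \<beta> pq]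
                  RW0[OF ab bn[OF pq(2)]] RWt[OF ab bn[OF pq(2)]] order_trans[OF pq(1,2)]
                by simp
            next
              case False
              show ?thesis unfolding phiS_snd[OF J \<beta>] hc_undef[OF sin False] by (rule if_not_P[OF False])
            qed
          qed
        qed
      qed
    qed
  qed
  show ?thesis unfolding Phi_def gr_proj_eq fst_conv snd_conv dZ dmZ sZ ..
qed

end

end

theorem theorem3p10:
  fixes D :: "('c, 'd) cat"
    and Fo :: "'c \<Rightarrow> ('o, 'm) scat"
    and Fob :: "'d \<Rightarrow> 'o \<Rightarrow> 'o"
    and Fhom :: "'d \<Rightarrow> nat \<Rightarrow> 'o \<Rightarrow> 'o \<Rightarrow> 'm \<Rightarrow> 'm"
  assumes "category D"
    and "scat_functor D Fo Fob Fhom"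
  shows "\<exists>\<Phi>.
     (\<forall>n. bij_betw (\<Phi> n) (hc_simp (gr_scat D Fo Fob Fhom) n)
            (rel_simp D (\<lambda>c. hc_nerve (Fo c)) (\<lambda>\<phi>. hc_nerve_map (Fob \<phi>) (Fhom \<phi>)) n)) \<and>
     (\<forall>m n \<alpha> x. mono_map m n \<alpha> \<longrightarrow> x \<in> hc_simp (gr_scat D Fo Fob Fhom) n \<longrightarrow>
        \<Phi> m (hc_act m n \<alpha> x) = rel_act m n \<alpha> (\<Phi> n x)) \<and>
     (\<forall>n x. x \<in> hc_simp (gr_scat D Fo Fob Fhom) n \<longrightarrow> rel_proj (\<Phi> n x) = gr_proj n x)"
proof -
  interpret grs D Fo Fob Fhom using assms by (rule grs.intro)
  show ?thesis
  proof (intro exI[of _ "Phi Fob Fhom"] conjI allI impI)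
    fix n
    show "bij_betw (Phi Fob Fhom n) (hc_simp (gr_scat D Fo Fob Fhom) n)
            (rel_simp D (\<lambda>c. hc_nerve (Fo c)) (\<lambda>\<phi>. hc_nerve_map (Fob \<phi>) (Fhom \<phi>)) n)"
    proof (rule bij_betw_byWitness[where f' = "Psi n"])
      show "\<forall>a\<in>hc_simp (gr_scat D Fo Fob Fhom) n. Psi n (Phi Fob Fhom n a) = a"
        using PsiPhi by blast
      show "\<forall>a'\<in>rel_simp D (\<lambda>c. hc_nerve (Fo c)) (\<lambda>\<phi>. hc_nerve_map (Fob \<phi>) (Fhom \<phi>)) n.
          Phi Fob Fhom n (Psi n a') = a'"
      proof
        fix a' assume a': "a' \<in> rel_simp D (\<lambda>c. hc_nerve (Fo c)) (\<lambda>\<phi>. hc_nerve_map (Fob \<phi>) (Fhom \<phi>)) n"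
        obtain d dm s where e: "a' = (d, dm, s)" by (cases a') auto
        show "Phi Fob Fhom n (Psi n a') = a'" using PhiPsi a' unfolding e by blast
      qed
      show "Phi Fob Fhom n ` hc_simp (gr_scat D Fo Fob Fhom) n
          \<subseteq> rel_simp D (\<lambda>c. hc_nerve (Fo c)) (\<lambda>\<phi>. hc_nerve_map (Fob \<phi>) (Fhom \<phi>)) n"
        using P_rel by blast
      show "Psi n ` rel_simp D (\<lambda>c. hc_nerve (Fo c)) (\<lambda>\<phi>. hc_nerve_map (Fob \<phi>) (Fhom \<phi>)) n
          \<subseteq> hc_simp (gr_scat D Fo Fob Fhom) n"
      proof
        fix y assume "y \<in> Psi n ` rel_simp D (\<lambda>c. hc_nerve (Fo c)) (\<lambda>\<phi>. hc_nerve_map (Fob \<phi>) (Fhom \<phi>)) n"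
        then obtain a' where a': "a' \<in> rel_simp D (\<lambda>c. hc_nerve (Fo c)) (\<lambda>\<phi>. hc_nerve_map (Fob \<phi>) (Fhom \<phi>)) n"
          and y: "y = Psi n a'" by blast
        obtain d dm s where e: "a' = (d, dm, s)" by (cases a') auto
        show "y \<in> hc_simp (gr_scat D Fo Fob Fhom) n" using PsiIn a' unfolding y e by blast
      qed
    qed
  next
    fix m n \<alpha> x assume "mono_map m n \<alpha>" "x \<in> hc_simp (gr_scat D Fo Fob Fhom) n"
    then show "Phi Fob Fhom m (hc_act m n \<alpha> x) = rel_act m n \<alpha> (Phi Fob Fhom n x)"
      using P_act by blast
  next
    fix n x
    show "rel_proj (Phi Fob Fhom n x) = gr_proj n x" by (simp add: Phi_def rel_proj_def)
  qed
qed

end
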